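(* For any $\epsilon\in(0,1/8)$ there exist $\theta=\theta(\epsilon)>0$ and $n_0$ depending on $\epsilon$ such that for all $n\ge n_0$ and all $x\in\mathbb{S}^{n-1}$ with $|\langle x,1_n/\sqrt{n}\rangle|\le1/2$, \[\mathcal{L}(q\cdot x,\theta)\le1/2+\epsilon,\] where $q$ is uniformly distributed on the set of vectors in $\{0,1\}^n$ with coordinate sum $\lfloor n/2\rfloor$.
   Context: $1_n$ is the all-ones vector in $\mathbb{R}^n$, $\mathbb{S}^{n-1}$ the Euclidean unit sphere, and for a random variable $\xi$ and $r\ge0$, $\mathcal{L}(\xi,r)=\sup_{z\in\mathbb{R}}\mathbb{P}[|\xi-z|\le r]$. *)

theory Defs
  imports "HOL-Probability.Probability"
begin

text \<open>Vectors in R^n are modelled as functions nat => real, only coordinates i < n matter.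
  Slice: 0/1 vectors (supported on {..<n}) with coordinate sum floor(n/2).\<close>
definition slice :: "nat \<Rightarrow> (nat \<Rightarrow> real) set" where
  "slice n = {q. (\<forall>i<n. q i = 0 \<or> q i = 1) \<and> (\<forall>i\<ge>n. q i = 0)
                 \<and> (\<Sum>i<n. q i) = real (n div 2)}"

definition dotn :: "nat \<Rightarrow> (nat \<Rightarrow> real) \<Rightarrow> (nat \<Rightarrow> real) \<Rightarrow> real" where
  "dotn n u v = (\<Sum>i<n. u i * v i)"

definition levy_slice :: "nat \<Rightarrow> (nat \<Rightarrow> real) \<Rightarrow> real \<Rightarrow> real" where
  "levy_slice n x r = (SUP z\<in>(UNIV::real set).
      measure (measure_pmf (pmf_of_set (slice n))) {q. \<bar>dotn n q x - z\<bar> \<le> r})"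

end

theory Submission
  imports Defs
begin


definition Ks :: "nat \<Rightarrow> nat \<Rightarrow> nat set set" where
  "Ks n k = {S. S \<subseteq> {..<n} \<and> card S = k}"

lemma Ks_finite: "finite (Ks n k)"
  unfolding Ks_def by (rule finite_subset[of _ "Pow {..<n}"]) auto

lemma card_Ks: "card (Ks n k) = n choose k"
  unfolding Ks_def using n_subsets[of "{..<n}" k] by simp

lemma card_pattern:
  assumes "I \<subseteq> {..<n}" "Ot \<subseteq> {..<n}" "I \<inter> Ot = {}" "card I \<le> k"
  shows "card {S \<in> Ks n k. I \<subseteq> S \<and> S \<inter> Ot = {}} = (n - card I - card Ot) choose (k - card I)"
proof -
  have fin: "finite I" "finite Ot" using assms(1,2) by (auto intro: finite_subset[of _ "{..<n}"])
  have "bij_betw (\<lambda>S. S - I) {S \<in> Ks n k. I \<subseteq> S \<and> S \<inter> Ot = {}}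
          {T. T \<subseteq> {..<n} - I - Ot \<and> card T = k - card I}"
  proof (rule bij_betw_byWitness[where f' = "\<lambda>T. T \<union> I"])
    show "\<forall>a\<in>{S \<in> Ks n k. I \<subseteq> S \<and> S \<inter> Ot = {}}. a - I \<union> I = a" by auto
    show "\<forall>a'\<in>{T. T \<subseteq> {..<n} - I - Ot \<and> card T = k - card I}. a' \<union> I - I = a'" by auto
    show "(\<lambda>S. S - I) ` {S \<in> Ks n k. I \<subseteq> S \<and> S \<inter> Ot = {}}
          \<subseteq> {T. T \<subseteq> {..<n} - I - Ot \<and> card T = k - card I}"
    proof
      fix T assume "T \<in> (\<lambda>S. S - I) ` {S \<in> Ks n k. I \<subseteq> S \<and> S \<inter> Ot = {}}"
      then obtain S where S: "S \<in> Ks n k" "I \<subseteq> S" "S \<inter> Ot = {}" "T = S - I" by auto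
      have "finite S" using S(1) unfolding Ks_def using finite_subset by auto
      then have "card (S - I) = card S - card I" using S(2) fin by (simp add: card_Diff_subset)
      then show "T \<in> {T. T \<subseteq> {..<n} - I - Ot \<and> card T = k - card I}"
        using S unfolding Ks_def by auto
    qed
    show "(\<lambda>T. T \<union> I) ` {T. T \<subseteq> {..<n} - I - Ot \<and> card T = k - card I}
          \<subseteq> {S \<in> Ks n k. I \<subseteq> S \<and> S \<inter> Ot = {}}"
    proof
      fix S assume "S \<in> (\<lambda>T. T \<union> I) ` {T. T \<subseteq> {..<n} - I - Ot \<and> card T = k - card I}"
      then obtain T where T: "T \<subseteq> {..<n} - I - Ot" "card T = k - card I" "S = T \<union> I" by auto
      have "finite T" using T(1) finite_subset by blast
      then have "card (T \<union> I) = card T + card I" using T(1) fin by (subst card_Un_disjoint) auto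
      then show "S \<in> {S \<in> Ks n k. I \<subseteq> S \<and> S \<inter> Ot = {}}"
        using T assms unfolding Ks_def by auto
    qed
  qed
  then have "card {S \<in> Ks n k. I \<subseteq> S \<and> S \<inter> Ot = {}} = card {T. T \<subseteq> {..<n} - I - Ot \<and> card T = k - card I}"
    by (rule bij_betw_same_card)
  also have "\<dots> = card ({..<n} - I - Ot) choose (k - card I)" by (rule n_subsets) auto
  also have "card ({..<n} - I - Ot) = n - card I - card Ot"
  proof -
    have "card ({..<n} - I) = n - card I" using assms fin by (simp add: card_Diff_subset)
    moreover have "card ({..<n} - I - Ot) = card ({..<n} - I) - card Ot"
      using assms fin by (intro card_Diff_subset) auto
    ultimately show ?thesis by simp
  qed
  finally show ?thesis .
qed

lemma choose_step:
  assumes "1 \<le> k" "k < n"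
  shows "(n choose k) * (k * (n - k)) = n * (n - 1) * ((n - 2) choose (k - 1))"
proof -
  obtain j where j: "k = Suc j" using assms by (cases k) auto
  have a: "k * (n choose k) = n * ((n - 1) choose j)" using binomial_absorption[of j n] j by simp
  have b: "((n - 1) - j) * ((n - 1) choose j) = (n - 1) * ((n - 1 - 1) choose j)"
    by (rule binomial_absorb_comp)
  have c: "(n - 1) - j = n - k" using j by simp
  have "(n choose k) * (k * (n - k)) = (k * (n choose k)) * (n - k)" by simp
  also have "\<dots> = n * (((n - 1) - j) * ((n - 1) choose j))" using a c by simp
  also have "\<dots> = n * (n - 1) * ((n - 2) choose (k - 1))" using b j by (simp add: numeral_2_eq_2)
  finally show ?thesis .
qed



lemma card_split:
  assumes "finite A"
  shows "card {S\<in>A. P S} = card {S\<in>A. P S \<and> Q S} + card {S\<in>A. P S \<and> \<not> Q S}"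
proof -
  have "{S\<in>A. P S} = {S\<in>A. P S \<and> Q S} \<union> {S\<in>A. P S \<and> \<not> Q S}" by auto
  moreover have "card ({S\<in>A. P S \<and> Q S} \<union> {S\<in>A. P S \<and> \<not> Q S}) = card {S\<in>A. P S \<and> Q S} + card {S\<in>A. P S \<and> \<not> Q S}"
    using assms by (intro card_Un_disjoint) auto
  ultimately show ?thesis by simp
qed

lemma card_pat2:
  assumes "a < n" "b < n" "a \<noteq> b" "1 \<le> k"
  shows "card {S \<in> Ks n k. a \<in> S \<and> b \<notin> S} = (n - 2) choose (k - 1)"
proof -
  have "{S \<in> Ks n k. a \<in> S \<and> b \<notin> S} = {S \<in> Ks n k. {a} \<subseteq> S \<and> S \<inter> {b} = {}}" by auto
  also have "card \<dots> = (n - card {a} - card {b}) choose (k - card {a})"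
    using assms by (intro card_pattern) auto
  finally show ?thesis by (simp add: numeral_2_eq_2)
qed

lemma card_pat4:
  assumes "a < n" "b < n" "c < n" "d < n" "distinct [a,b,c,d]" "2 \<le> k"
  shows "card {S \<in> Ks n k. a \<in> S \<and> b \<in> S \<and> c \<notin> S \<and> d \<notin> S} = (n - 4) choose (k - 2)"
proof -
  have "{S \<in> Ks n k. a \<in> S \<and> b \<in> S \<and> c \<notin> S \<and> d \<notin> S} = {S \<in> Ks n k. {a,b} \<subseteq> S \<and> S \<inter> {c,d} = {}}" by auto
  also have "card \<dots> = (n - card {a,b} - card {c,d}) choose (k - card {a,b})"
    using assms by (intro card_pattern) auto
  also have "card {a,b} = 2" using assms by auto
  also have "card {c,d} = 2" using assms by auto
  finally show ?thesis by simp
qed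

definition mixed :: "nat set \<Rightarrow> nat \<Rightarrow> nat \<Rightarrow> bool" where
  "mixed S a b \<longleftrightarrow> ((a \<in> S) \<noteq> (b \<in> S))"

lemma card_mixed1:
  assumes "a < n" "b < n" "a \<noteq> b" "1 \<le> k"
  shows "card {S \<in> Ks n k. mixed S a b} = 2 * ((n - 2) choose (k - 1))"
proof -
  have "card {S \<in> Ks n k. mixed S a b} = card {S \<in> Ks n k. mixed S a b \<and> a \<in> S} + card {S \<in> Ks n k. mixed S a b \<and> a \<notin> S}"
    by (rule card_split[OF Ks_finite])
  also have "{S \<in> Ks n k. mixed S a b \<and> a \<in> S} = {S \<in> Ks n k. a \<in> S \<and> b \<notin> S}" unfolding mixed_def by auto
  also have "{S \<in> Ks n k. mixed S a b \<and> a \<notin> S} = {S \<in> Ks n k. b \<in> S \<and> a \<notin> S}" unfolding mixed_def by auto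
  finally show ?thesis using card_pat2[OF assms] card_pat2[of b n a k] assms by simp
qed

lemma card_mixed2:
  assumes "a < n" "b < n" "c < n" "d < n" "distinct [a,b,c,d]" "2 \<le> k"
  shows "card {S \<in> Ks n k. mixed S a b \<and> mixed S c d} = 4 * ((n - 4) choose (k - 2))"
proof -
  let ?P = "\<lambda>S. mixed S a b \<and> mixed S c d"
  have s1: "card {S \<in> Ks n k. ?P S} = card {S \<in> Ks n k. ?P S \<and> a \<in> S} + card {S \<in> Ks n k. ?P S \<and> a \<notin> S}"
    by (rule card_split[OF Ks_finite])
  have s2: "card {S \<in> Ks n k. ?P S \<and> a \<in> S} = card {S \<in> Ks n k. (?P S \<and> a \<in> S) \<and> c \<in> S} + card {S \<in> Ks n k. (?P S \<and> a \<in> S) \<and> c \<notin> S}"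
    by (rule card_split[OF Ks_finite])
  have s3: "card {S \<in> Ks n k. ?P S \<and> a \<notin> S} = card {S \<in> Ks n k. (?P S \<and> a \<notin> S) \<and> c \<in> S} + card {S \<in> Ks n k. (?P S \<and> a \<notin> S) \<and> c \<notin> S}"
    by (rule card_split[OF Ks_finite])
  have e1: "{S \<in> Ks n k. (?P S \<and> a \<in> S) \<and> c \<in> S} = {S \<in> Ks n k. a \<in> S \<and> c \<in> S \<and> b \<notin> S \<and> d \<notin> S}"
    unfolding mixed_def by auto
  have e2: "{S \<in> Ks n k. (?P S \<and> a \<in> S) \<and> c \<notin> S} = {S \<in> Ks n k. a \<in> S \<and> d \<in> S \<and> b \<notin> S \<and> c \<notin> S}"
    unfolding mixed_def by auto
  have e3: "{S \<in> Ks n k. (?P S \<and> a \<notin> S) \<and> c \<in> S} = {S \<in> Ks n k. b \<in> S \<and> c \<in> S \<and> a \<notin> S \<and> d \<notin> S}"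
    unfolding mixed_def by auto
  have e4: "{S \<in> Ks n k. (?P S \<and> a \<notin> S) \<and> c \<notin> S} = {S \<in> Ks n k. b \<in> S \<and> d \<in> S \<and> a \<notin> S \<and> c \<notin> S}"
    unfolding mixed_def by auto
  have "card {S \<in> Ks n k. a \<in> S \<and> c \<in> S \<and> b \<notin> S \<and> d \<notin> S} = (n - 4) choose (k - 2)"
    using assms by (intro card_pat4) auto
  moreover have "card {S \<in> Ks n k. a \<in> S \<and> d \<in> S \<and> b \<notin> S \<and> c \<notin> S} = (n - 4) choose (k - 2)"
    using assms by (intro card_pat4) auto
  moreover have "card {S \<in> Ks n k. b \<in> S \<and> c \<in> S \<and> a \<notin> S \<and> d \<notin> S} = (n - 4) choose (k - 2)"
    using assms by (intro card_pat4) auto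
  moreover have "card {S \<in> Ks n k. b \<in> S \<and> d \<in> S \<and> a \<notin> S \<and> c \<notin> S} = (n - 4) choose (k - 2)"
    using assms by (intro card_pat4) auto
  ultimately show ?thesis using s1 s2 s3 e1 e2 e3 e4 by simp
qed



lemma k_facts:
  assumes "8 \<le> (n::nat)"
  shows "4 \<le> n div 2" "n div 2 \<le> n - n div 2" "n - n div 2 \<le> n div 2 + 1" "n div 2 < n"
  using assms by auto

lemma B_I1:
  assumes "8 \<le> n"
  shows "(n choose (n div 2)) * ((n div 2) * (n - n div 2)) = n * (n - 1) * ((n - 2) choose (n div 2 - 1))"
  using assms by (intro choose_step) auto

lemma B_I2:
  assumes "8 \<le> n"
  shows "((n - 2) choose (n div 2 - 1)) * ((n div 2 - 1) * (n - n div 2 - 1)) = (n - 2) * (n - 3) * ((n - 4) choose (n div 2 - 2))"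
proof -
  have "((n - 2) choose (n div 2 - 1)) * ((n div 2 - 1) * ((n - 2) - (n div 2 - 1))) = (n - 2) * (n - 2 - 1) * ((n - 2 - 2) choose (n div 2 - 1 - 1))"
    using assms by (intro choose_step) auto
  moreover have "(n - 2) - (n div 2 - 1) = n - n div 2 - 1" "n - 2 - 1 = n - 3" "n - 2 - 2 = n - 4" "n div 2 - 1 - 1 = n div 2 - 2"
    using assms by auto
  ultimately show ?thesis by simp
qed

lemma B_pos: "0 < (n choose (n div 2))" by simp

lemma p_half:
  assumes "8 \<le> n"
  shows "real (n choose (n div 2)) \<le> 4 * real ((n - 2) choose (n div 2 - 1))"
proof -
  let ?k = "n div 2"
  have "n * (n - 1) \<le> 4 * (?k * (n - ?k))"
  proof -
    obtain m where "n = 2 * m \<or> n = 2 * m + 1" by (metis odd_two_times_div_two_succ dvd_mult_div_cancel even_iff_mod_2_eq_zero) 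
    then show ?thesis
    proof
      assume h: "n = 2 * m"
      then have k: "?k = m" by simp
      have "n * (n - 1) \<le> n * n" by simp
      also have "n * n = 4 * (m * m)" using h by simp
      finally show ?thesis using k h by simp
    next
      assume h: "n = 2 * m + 1"
      then have k: "?k = m" by simp
      have "n * (n - 1) = (2 * m + 1) * (2 * m)" using h by simp
      also have "\<dots> \<le> 4 * (m * (m + 1))" by (simp add: algebra_simps)
      finally show ?thesis using k h by simp
    qed
  qed
  then have "(n choose ?k) * (n * (n - 1)) \<le> (n choose ?k) * (4 * (?k * (n - ?k)))" by simp
  also have "\<dots> = 4 * ((n choose ?k) * (?k * (n - ?k)))" by (rule mult.left_commute)
  also have "\<dots> = 4 * (n * (n - 1) * ((n - 2) choose (?k - 1)))" by (simp only: B_I1[OF assms])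
  also have "\<dots> = 4 * ((n - 2) choose (?k - 1)) * (n * (n - 1))" by (simp only: mult.commute mult.left_commute mult.assoc)
  finally have "(n choose ?k) * (n * (n - 1)) \<le> 4 * ((n - 2) choose (?k - 1)) * (n * (n - 1))" .
  moreover have "0 < n * (n - 1)" using assms by simp
  ultimately have "(n choose ?k) \<le> 4 * ((n - 2) choose (?k - 1))" by simp
  then show ?thesis by (metis of_nat_le_iff of_nat_mult of_nat_numeral)
qed

lemma p2_bound:
  assumes "8 \<le> n"
  shows "real ((n - 4) choose (n div 2 - 2)) * real (n choose (n div 2)) * ((n - 2) * (n - 3))
     \<le> real ((n - 2) choose (n div 2 - 1))^2 * (n * (n - 1))"
proof -
  let ?k = "n div 2"
  let ?B0 = "n choose ?k" and ?B1 = "(n - 2) choose (?k - 1)" and ?B2 = "(n - 4) choose (?k - 2)"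
  have "?B2 * ?B0 * ((n - 2) * (n - 3)) * (?k * (n - ?k)) = ((n - 2) * (n - 3) * ?B2) * (?B0 * (?k * (n - ?k)))"
    by (simp only: mult.commute mult.left_commute mult.assoc)
  also have "\<dots> = (?B1 * ((?k - 1) * (n - ?k - 1))) * (n * (n - 1) * ?B1)"
    using B_I1[OF assms] B_I2[OF assms] by simp
  also have "\<dots> \<le> (?B1 * (?k * (n - ?k))) * (n * (n - 1) * ?B1)"
  proof -
    have "(?k - 1) * (n - ?k - 1) \<le> ?k * (n - ?k)" by (intro mult_le_mono) auto
    then show ?thesis by (intro mult_right_mono mult_left_mono) auto
  qed
  also have "\<dots> = (?B1^2 * (n * (n - 1))) * (?k * (n - ?k))"
    by (simp only: power2_eq_square mult.commute mult.left_commute mult.assoc)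
  finally have "?B2 * ?B0 * ((n - 2) * (n - 3)) * (?k * (n - ?k)) \<le> (?B1^2 * (n * (n - 1))) * (?k * (n - ?k))" .
  moreover have "0 < ?k * (n - ?k)" using assms by simp
  ultimately have "?B2 * ?B0 * ((n - 2) * (n - 3)) \<le> ?B1^2 * (n * (n - 1))"
    using mult_le_cancel2 by blast
  then have "real (?B2 * ?B0 * ((n - 2) * (n - 3))) \<le> real (?B1^2 * (n * (n - 1)))"
    by (simp only: of_nat_le_iff)
  moreover have "real ((n - 2) * (n - 3)) = (real n - 2) * (real n - 3)" using assms by (simp add: of_nat_diff)
  moreover have "real (n * (n - 1)) = real n * (real n - 1)" using assms by (simp add: of_nat_diff)
  ultimately show ?thesis using assms by (simp add: of_nat_diff)
qed



definition ind :: "nat set \<Rightarrow> nat \<Rightarrow> real" where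
  "ind S = (\<lambda>i. if i \<in> S then 1 else 0)"

lemma ind_inj: "inj ind"
proof (rule injI)
  fix S T assume "ind S = ind T"
  then have "\<forall>i. (i \<in> S) = (i \<in> T)" unfolding ind_def by (metis one_neq_zero)
  then show "S = T" by auto
qed

lemma sum_ind_card:
  assumes "finite A"
  shows "(\<Sum>i\<in>A. if i \<in> S then 1 else (0::real)) = real (card (A \<inter> S))"
  using assms by (simp add: sum.inter_restrict[symmetric])

lemma Ks_nonempty: "{..<n div 2} \<in> Ks n (n div 2)"
  unfolding Ks_def by auto

lemma slice_eq: "slice n = ind ` Ks n (n div 2)"
proof
  show "slice n \<subseteq> ind ` Ks n (n div 2)"
  proof
    fix q assume q: "q \<in> slice n"
    let ?S = "{i. i < n \<and> q i = 1}"
    have qi: "q = ind ?S"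
    proof
      fix i show "q i = ind ?S i"
        using q unfolding slice_def ind_def by (cases "i < n") auto
    qed
    have "(\<Sum>i<n. q i) = (\<Sum>i<n. if i \<in> ?S then 1 else 0)" using qi unfolding ind_def by metis
    also have "\<dots> = real (card ({..<n} \<inter> ?S))" by (rule sum_ind_card) simp
    also have "{..<n} \<inter> ?S = ?S" by auto
    finally have "card ?S = n div 2" using q unfolding slice_def by simp
    then have "?S \<in> Ks n (n div 2)" unfolding Ks_def by auto
    then show "q \<in> ind ` Ks n (n div 2)" using qi by blast
  qed
  show "ind ` Ks n (n div 2) \<subseteq> slice n"
  proof
    fix q assume "q \<in> ind ` Ks n (n div 2)"
    then obtain S where S: "S \<subseteq> {..<n}" "card S = n div 2" "q = ind S" unfolding Ks_def by auto
    have "(\<Sum>i<n. q i) = real (card ({..<n} \<inter> S))" using S(3) sum_ind_card[of "{..<n}" S] unfolding ind_def by simp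
    also have "{..<n} \<inter> S = S" using S(1) by auto
    finally have "(\<Sum>i<n. q i) = real (n div 2)" using S(2) by simp
    moreover have "\<forall>i\<ge>n. q i = 0" using S unfolding ind_def by auto
    moreover have "\<forall>i<n. q i = 0 \<or> q i = 1" using S unfolding ind_def by auto
    ultimately show "q \<in> slice n" unfolding slice_def by auto
  qed
qed

lemma dot_ind:
  assumes "S \<subseteq> {..<n}"
  shows "dotn n (ind S) x = (\<Sum>i\<in>S. x i)"
proof -
  have "dotn n (ind S) x = (\<Sum>i<n. if i \<in> S then x i else 0)" unfolding dotn_def ind_def
    by (intro sum.cong) auto
  also have "\<dots> = (\<Sum>i\<in>{..<n} \<inter> S. x i)" by (simp add: sum.inter_restrict)
  also have "{..<n} \<inter> S = S" using assms by auto
  finally show ?thesis .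
qed

lemma levy_bound:
  assumes "\<And>z. real (card {S \<in> Ks n (n div 2). \<bar>(\<Sum>i\<in>S. x i) - z\<bar> \<le> \<theta>}) \<le> c * real (card (Ks n (n div 2)))"
  shows "levy_slice n x \<theta> \<le> c"
  unfolding levy_slice_def
proof (rule cSUP_least)
  show "(UNIV::real set) \<noteq> {}" by simp
  fix z
  let ?K = "Ks n (n div 2)"
  have fin: "finite (slice n)" "slice n \<noteq> {}" unfolding slice_eq using Ks_finite Ks_nonempty
    by auto
  have cardK: "card (slice n) = card ?K" unfolding slice_eq by (rule card_image) (rule inj_on_subset[OF ind_inj], simp)
  have "slice n \<inter> {q. \<bar>dotn n q x - z\<bar> \<le> \<theta>} = ind ` {S \<in> ?K. \<bar>(\<Sum>i\<in>S. x i) - z\<bar> \<le> \<theta>}"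
  proof
    show "slice n \<inter> {q. \<bar>dotn n q x - z\<bar> \<le> \<theta>} \<subseteq> ind ` {S \<in> ?K. \<bar>(\<Sum>i\<in>S. x i) - z\<bar> \<le> \<theta>}"
    proof
      fix q assume "q \<in> slice n \<inter> {q. \<bar>dotn n q x - z\<bar> \<le> \<theta>}"
      then obtain S where S: "S \<in> ?K" "q = ind S" "\<bar>dotn n q x - z\<bar> \<le> \<theta>" unfolding slice_eq by blast
      have "dotn n q x = (\<Sum>i\<in>S. x i)" using S(1,2) dot_ind unfolding Ks_def by blast
      then show "q \<in> ind ` {S \<in> ?K. \<bar>(\<Sum>i\<in>S. x i) - z\<bar> \<le> \<theta>}" using S by auto
    qed
    show "ind ` {S \<in> ?K. \<bar>(\<Sum>i\<in>S. x i) - z\<bar> \<le> \<theta>} \<subseteq> slice n \<inter> {q. \<bar>dotn n q x - z\<bar> \<le> \<theta>}"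
    proof
      fix q assume "q \<in> ind ` {S \<in> ?K. \<bar>(\<Sum>i\<in>S. x i) - z\<bar> \<le> \<theta>}"
      then obtain S where S: "S \<in> ?K" "q = ind S" "\<bar>(\<Sum>i\<in>S. x i) - z\<bar> \<le> \<theta>" by blast
      have "dotn n q x = (\<Sum>i\<in>S. x i)" using S(1,2) dot_ind unfolding Ks_def by blast
      then show "q \<in> slice n \<inter> {q. \<bar>dotn n q x - z\<bar> \<le> \<theta>}" using S unfolding slice_eq by auto
    qed
  qed
  then have "card (slice n \<inter> {q. \<bar>dotn n q x - z\<bar> \<le> \<theta>}) = card {S \<in> ?K. \<bar>(\<Sum>i\<in>S. x i) - z\<bar> \<le> \<theta>}"
    using card_image[OF inj_on_subset[OF ind_inj subset_UNIV]] by simp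
  moreover have "0 < card ?K" using Ks_finite Ks_nonempty by (auto simp: card_gt_0_iff)
  ultimately show "measure (measure_pmf (pmf_of_set (slice n))) {q. \<bar>dotn n q x - z\<bar> \<le> \<theta>} \<le> c"
    using assms[of z] fin cardK by (simp add: measure_pmf_of_set divide_le_eq)
qed



definition sw :: "nat \<Rightarrow> nat set \<Rightarrow> nat \<Rightarrow> nat set" where
  "sw i S j = (if i \<in> S then insert j (S - {i}) else insert i (S - {j}))"

lemma sw_props:
  fixes x :: "nat \<Rightarrow> real"
  assumes S: "S \<in> Ks n k" and i: "i < n" and j: "j < n" and m: "mixed S i j"
  shows "sw i S j \<in> Ks n k" "mixed (sw i S j) i j" "sw i (sw i S j) j = S"
    "\<bar>sum x (sw i S j) - sum x S\<bar> = \<bar>x j - x i\<bar>"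
proof -
  have ij: "i \<noteq> j" using m unfolding mixed_def by auto
  have finS: "finite S" using S unfolding Ks_def using finite_subset by blast
  show "sw i S j \<in> Ks n k"
  proof (cases "i \<in> S")
    case True
    then have "j \<notin> S" using m unfolding mixed_def by auto
    then have "card (insert j (S - {i})) = card S" using True finS
      by (simp add: card_insert_if) (metis Suc_pred card_gt_0_iff empty_iff)
    then show ?thesis using S True i j unfolding sw_def Ks_def by auto
  next
    case False
    then have "j \<in> S" using m unfolding mixed_def by auto
    then have "card (insert i (S - {j})) = card S" using False finS
      by (simp add: card_insert_if) (metis Suc_pred card_gt_0_iff empty_iff)
    then show ?thesis using S False i j unfolding sw_def Ks_def by auto
  qed
  show "mixed (sw i S j) i j" using m ij unfolding mixed_def sw_def by auto
  show "sw i (sw i S j) j = S" using m ij unfolding mixed_def sw_def by auto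
  show "\<bar>sum x (sw i S j) - sum x S\<bar> = \<bar>x j - x i\<bar>"
  proof (cases "i \<in> S")
    case True
    then have jS: "j \<notin> S" using m unfolding mixed_def by auto
    have "sum x (insert j (S - {i})) = x j + sum x (S - {i})" using jS finS by simp
    moreover have "sum x S = x i + sum x (S - {i})" using True finS by (simp add: sum.remove)
    ultimately show ?thesis using True unfolding sw_def by simp
  next
    case False
    then have jS: "j \<in> S" using m unfolding mixed_def by auto
    have "sum x (insert i (S - {j})) = x i + sum x (S - {j})" using False finS by simp
    moreover have "sum x S = x j + sum x (S - {j})" using jS finS by (simp add: sum.remove)
    ultimately show ?thesis using False unfolding sw_def by (simp add: abs_minus_commute)
  qed
qed

lemma deg_bound:
  assumes S: "S \<in> Ks n (n div 2)" and G: "G \<subseteq> {..<n}"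
  shows "card {j \<in> G. mixed S i j} \<le> n - n div 2"
proof (cases "i \<in> S")
  case True
  have "{j \<in> G. mixed S i j} \<subseteq> {..<n} - S" using True G unfolding mixed_def by auto
  then have "card {j \<in> G. mixed S i j} \<le> card ({..<n} - S)" by (intro card_mono) auto
  also have "\<dots> = n - n div 2"
  proof -
    have "finite S" "S \<subseteq> {..<n}" "card S = n div 2" using S unfolding Ks_def by (auto intro: finite_subset)
    then show ?thesis by (simp add: card_Diff_subset)
  qed
  finally show ?thesis .
next
  case False
  have "{j \<in> G. mixed S i j} \<subseteq> S" using False unfolding mixed_def by auto
  then have "card {j \<in> G. mixed S i j} \<le> card S" using S unfolding Ks_def by (intro card_mono) (auto intro: finite_subset)
  also have "\<dots> \<le> n - n div 2" using S unfolding Ks_def by auto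
  finally show ?thesis .
qed

lemma caseI_comb:
  fixes x :: "nat \<Rightarrow> real" and z \<theta> :: real
  assumes n8: "8 \<le> n" and i: "i < n" and G: "G \<subseteq> {..<n} - {i}" and Gsep: "\<forall>j\<in>G. 2*\<theta> < \<bar>x j - x i\<bar>"
  defines "K \<equiv> Ks n (n div 2)"
  defines "A \<equiv> {S \<in> K. \<bar>sum x S - z\<bar> \<le> \<theta>}"
  shows "card G * (2 * ((n - 2) choose (n div 2 - 1))) \<le> 2 * ((card K - card A) * (n - n div 2))"
proof -
  let ?P = "Sigma G (\<lambda>j. {S \<in> K. mixed S i j})"
  let ?PA = "{p \<in> ?P. snd p \<in> A}"
  let ?PB = "{p \<in> ?P. snd p \<notin> A}"
  have finG: "finite G" using G finite_subset by blast
  have finK: "finite K" unfolding K_def by (rule Ks_finite)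
  have finP: "finite ?P" using finG finK by auto
  have cP: "card ?P = card G * (2 * ((n - 2) choose (n div 2 - 1)))"
  proof -
    have "card ?P = (\<Sum>j\<in>G. card {S \<in> K. mixed S i j})" using finG finK by (simp add: card_SigmaI)
    also have "\<dots> = (\<Sum>j\<in>G. 2 * ((n - 2) choose (n div 2 - 1)))"
    proof (rule sum.cong)
      fix j assume "j \<in> G"
      then show "card {S \<in> K. mixed S i j} = 2 * ((n - 2) choose (n div 2 - 1))"
        unfolding K_def using G i n8 by (intro card_mixed1) auto
    qed simp
    finally show ?thesis by simp
  qed
  have cPsplit: "card ?P = card ?PA + card ?PB"
    using card_split[OF finP, of "\<lambda>p. True" "\<lambda>p. snd p \<in> A"] by simp
  have AB: "card ?PA \<le> card ?PB"
  proof -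
    let ?f = "\<lambda>p. (fst p, sw i (snd p) (fst p))"
    have inj: "inj_on ?f ?PA"
    proof (rule inj_onI)
      fix p q assume p: "p \<in> ?PA" and q: "q \<in> ?PA" and e: "?f p = ?f q"
      have "fst p = fst q" using e by simp
      moreover have "snd p = snd q"
      proof -
        have "sw i (sw i (snd p) (fst p)) (fst p) = snd p"
          using p G i unfolding K_def by (intro sw_props(3)[where n=n and k="n div 2"]) auto
        moreover have "sw i (sw i (snd q) (fst q)) (fst q) = snd q"
          using q G i unfolding K_def by (intro sw_props(3)[where n=n and k="n div 2"]) auto
        ultimately show ?thesis using e by (metis prod.inject)
      qed
      ultimately show "p = q" by (simp add: prod_eq_iff)
    qed
    have img: "?f ` ?PA \<subseteq> ?PB"
    proof
      fix p' assume "p' \<in> ?f ` ?PA"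
      then obtain j S where p: "(j, S) \<in> ?PA" "p' = (j, sw i S j)" by auto
      have jG: "j \<in> G" and SK: "S \<in> K" and m: "mixed S i j" and SA: "S \<in> A" using p by auto
      have jn: "j < n" using jG G by auto
      have 1: "sw i S j \<in> K" using sw_props(1)[of S n "n div 2" i j] SK i jn m unfolding K_def by auto
      have 2: "mixed (sw i S j) i j" using sw_props(2)[of S n "n div 2" i j] SK i jn m unfolding K_def by auto
      have 3: "\<bar>sum x (sw i S j) - sum x S\<bar> = \<bar>x j - x i\<bar>"
        using sw_props(4)[of S n "n div 2" i j] SK i jn m unfolding K_def by auto
      have "sw i S j \<notin> A"
      proof
        assume "sw i S j \<in> A"
        then have "\<bar>sum x (sw i S j) - z\<bar> \<le> \<theta>" unfolding A_def by auto
        moreover have "\<bar>sum x S - z\<bar> \<le> \<theta>" using SA unfolding A_def by auto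
        ultimately have "\<bar>sum x (sw i S j) - sum x S\<bar> \<le> 2 * \<theta>" by linarith
        then show False using 3 Gsep jG by auto
      qed
      then show "p' \<in> ?PB" using p(2) jG 1 2 by auto
    qed
    have "card ?PA = card (?f ` ?PA)" using inj by (simp add: card_image)
    also have "\<dots> \<le> card ?PB" using img finP by (intro card_mono) auto
    finally show ?thesis .
  qed
  have PBb: "card ?PB \<le> (card K - card A) * (n - n div 2)"
  proof -
    let ?Q = "Sigma (K - A) (\<lambda>S. {j \<in> G. mixed S i j})"
    have "?PB = (\<lambda>(S, j). (j, S)) ` ?Q" by auto
    then have "card ?PB = card ?Q" by (simp add: card_image inj_on_def)
    also have "\<dots> = (\<Sum>S\<in>K - A. card {j \<in> G. mixed S i j})" using finG finK by (simp add: card_SigmaI)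
    also have "\<dots> \<le> (\<Sum>S\<in>K - A. n - n div 2)"
      using G unfolding K_def by (intro sum_mono deg_bound) auto
    also have "\<dots> = card (K - A) * (n - n div 2)" by simp
    also have "card (K - A) = card K - card A" using finK unfolding A_def by (intro card_Diff_subset) auto
    finally show ?thesis .
  qed
  show ?thesis using cP cPsplit AB PBb by linarith
qed



lemma caseI:
  fixes x :: "nat \<Rightarrow> real" and z \<theta> Bc :: real
  assumes n8: "8 \<le> n" and i: "i < n" and G: "G \<subseteq> {..<n} - {i}" and Gsep: "\<forall>j\<in>G. 2*\<theta> < \<bar>x j - x i\<bar>"
    and Gbig: "real n - 1 - Bc \<le> real (card G)"
  shows "real (card {S \<in> Ks n (n div 2). \<bar>sum x S - z\<bar> \<le> \<theta>}) \<le> (1/2 + (1 + Bc)/(2*n)) * real (card (Ks n (n div 2)))"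
proof -
  define K where "K = Ks n (n div 2)"
  define A where "A = {S \<in> K. \<bar>sum x S - z\<bar> \<le> \<theta>}"
  define k where "k = n div 2"
  define B1 where "B1 = (n - 2) choose (k - 1)"
  have comb: "card G * (2 * B1) \<le> 2 * ((card K - card A) * (n - k))"
    using caseI_comb[OF n8 i G Gsep, of z] unfolding K_def A_def B1_def k_def by simp
  have aK: "card A \<le> card K" unfolding A_def using Ks_finite K_def by (intro card_mono) auto
  have I1: "card K * (k * (n - k)) = n * (n - 1) * B1" unfolding K_def B1_def k_def card_Ks by (rule B_I1[OF n8])
  have kk: "real n - 1 \<le> 2 * real k" "2 * real k \<le> real n" unfolding k_def by linarith+
  have nk: "real (n - k) = real n - real k" unfolding k_def by (simp add: of_nat_diff)
  have nkpos: "0 < real n - real k" using kk n8 by linarith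
  have npos: "0 < real n * (real n - 1)" using n8 by simp
  have c1: "real (card G) * real B1 \<le> (real (card K) - real (card A)) * (real n - real k)"
  proof -
    have "real (card G * (2 * B1)) \<le> real (2 * ((card K - card A) * (n - k)))" using comb by (simp only: of_nat_le_iff)
    then show ?thesis using aK nk by (simp add: of_nat_diff)
  qed
  have c2: "real (card K) * (real k * (real n - real k)) = real n * (real n - 1) * real B1"
  proof -
    have "real (card K * (k * (n - k))) = real (n * (n - 1) * B1)" using I1 by simp
    then show ?thesis using nk n8 by (simp add: of_nat_diff)
  qed
  define N where "N = real (card K)"
  define g where "g = real (card G)"
  define a where "a = real (card A)"
  have c3: "g * N * real k \<le> (N - a) * (real n * (real n - 1))"
  proof -
    have "g * (N * (real k * (real n - real k))) = g * (real n * (real n - 1) * real B1)"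
      using c2 unfolding N_def by simp
    also have "\<dots> = real n * (real n - 1) * (g * real B1)" by simp
    also have "\<dots> \<le> real n * (real n - 1) * ((N - a) * (real n - real k))"
      using c1 npos unfolding N_def g_def a_def by (intro mult_left_mono) auto
    finally have "(g * N * real k) * (real n - real k) \<le> ((N - a) * (real n * (real n - 1))) * (real n - real k)"
      by (simp add: algebra_simps)
    then show ?thesis using nkpos by simp
  qed
  have c4: "(real n - 1 - Bc) * (real n - 1) \<le> g * (2 * real k)"
  proof (cases "0 \<le> real n - 1 - Bc")
    case True
    have "(real n - 1 - Bc) * (real n - 1) \<le> g * (real n - 1)"
      using Gbig n8 unfolding g_def by (intro mult_right_mono) auto
    also have "\<dots> \<le> g * (2 * real k)" using kk unfolding g_def by (intro mult_left_mono) auto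
    finally show ?thesis .
  next
    case False
    then have "(real n - 1 - Bc) * (real n - 1) \<le> 0" using n8 by (intro mult_nonpos_nonneg) auto
    also have "0 \<le> g * (2 * real k)" unfolding g_def by simp
    finally show ?thesis .
  qed
  have N0: "0 \<le> N" unfolding N_def by simp
  have "a * (real n * (real n - 1)) \<le> N * (real n * (real n - 1)) - g * N * real k" using c3 by (simp add: algebra_simps)
  also have "\<dots> \<le> N * (real n * (real n - 1)) - N * (real n - 1 - Bc) * (real n - 1) / 2"
  proof -
    have "N * ((real n - 1 - Bc) * (real n - 1)) \<le> N * (g * (2 * real k))" using c4 N0 by (intro mult_left_mono) auto
    then show ?thesis by (simp add: algebra_simps)
  qed
  also have "\<dots> = ((1/2 + (1 + Bc)/(2*n)) * N) * (real n * (real n - 1))"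
    using n8 by (simp add: field_simps)
  finally have "a * (real n * (real n - 1)) \<le> ((1/2 + (1 + Bc)/(2*n)) * N) * (real n * (real n - 1))" .
  then have "a \<le> (1/2 + (1 + Bc)/(2*n)) * N" using npos by (rule mult_right_le_imp_le)
  then show ?thesis unfolding a_def N_def A_def K_def by simp
qed



definition Sw :: "(nat \<Rightarrow> real) \<Rightarrow> nat set \<Rightarrow> nat \<Rightarrow> real" where
  "Sw c R t = (\<Sum>l<t. if l \<in> R then - c l else c l)"

definition conf :: "(nat \<Rightarrow> real) \<Rightarrow> real \<Rightarrow> nat set \<Rightarrow> nat \<Rightarrow> bool" where
  "conf c r R L \<longleftrightarrow> (\<forall>t\<le>L. \<bar>Sw c R t\<bar> \<le> r)"

fun Fst :: "(nat \<Rightarrow> real) \<Rightarrow> real \<Rightarrow> nat set \<Rightarrow> nat \<Rightarrow> real" where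
  "Fst c r R 0 = 0"
| "Fst c r R (Suc L) = (if conf c r R L then (Sw c R (Suc L))\<^sup>2 else Fst c r R L)"

lemma Sw_Suc: "Sw c R (Suc t) = Sw c R t + (if t \<in> R then - c t else c t)"
  unfolding Sw_def by simp

lemma conf_Suc: "conf c r R (Suc L) \<longleftrightarrow> conf c r R L \<and> \<bar>Sw c R (Suc L)\<bar> \<le> r"
  unfolding conf_def by (auto simp: le_Suc_eq)

lemma Sw_insert: "t \<le> L \<Longrightarrow> Sw c (insert L R) t = Sw c R t"
  unfolding Sw_def by (intro sum.cong) auto

lemma conf_insert: "M \<le> L \<Longrightarrow> conf c r (insert L R) M = conf c r R M"
  unfolding conf_def using Sw_insert by force

lemma Fst_insert: "M \<le> L \<Longrightarrow> Fst c r (insert L R) M = Fst c r R M"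
proof (induction M)
  case 0 then show ?case by simp
next
  case (Suc M)
  then show ?case using conf_insert[of M L c r R] Sw_insert[of "Suc M" L c R] by simp
qed

lemma Fst_conf: "conf c r R L \<Longrightarrow> Fst c r R L = (Sw c R L)\<^sup>2"
proof (cases L)
  case 0 then show ?thesis by (simp add: Sw_def)
next
  case (Suc M)
  assume "conf c r R L"
  then have "conf c r R M" using Suc conf_Suc by blast
  then show ?thesis using Suc by simp
qed

lemma Fst_bound:
  assumes D: "\<And>l. \<bar>c l\<bar> \<le> D" and r: "0 \<le> r"
  shows "Fst c r R L \<le> (r + D)\<^sup>2"
proof (induction L)
  case 0 then show ?case by simp
next
  case (Suc L)
  show ?case
  proof (cases "conf c r R L")
    case True
    then have "\<bar>Sw c R L\<bar> \<le> r" unfolding conf_def by auto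
    then have "\<bar>Sw c R (Suc L)\<bar> \<le> r + D" using D[of L] by (auto simp: Sw_Suc)
    then have "(Sw c R (Suc L))\<^sup>2 \<le> (r + D)\<^sup>2"
      by (metis abs_le_square_iff abs_of_nonneg abs_ge_zero order.trans)
    then show ?thesis using True by simp
  next
    case False then show ?thesis using Suc by simp
  qed
qed

lemma Pow_Suc_split:
  "(\<Sum>R\<in>Pow {..<Suc L}. f R) = (\<Sum>R\<in>Pow {..<L}. f R) + (\<Sum>R\<in>Pow {..<L}. f (insert L R))"
proof -
  have "Pow {..<Suc L} = Pow {..<L} \<union> insert L ` Pow {..<L}" by (simp add: lessThan_Suc Pow_insert)
  moreover have "Pow {..<L} \<inter> insert L ` Pow {..<L} = {}" by auto
  moreover have "inj_on (insert L) (Pow {..<L})"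
    by (rule inj_onI) (metis Diff_insert_absorb PowD lessThan_iff less_irrefl subsetD)
  ultimately show ?thesis by (simp add: sum.union_disjoint sum.reindex)
qed

lemma card_Pow_Suc_split:
  "card {R \<in> Pow {..<Suc L}. P R} \<le> card {R \<in> Pow {..<L}. P R} + card {R \<in> Pow {..<L}. P (insert L R)}"
proof -
  have "{R \<in> Pow {..<Suc L}. P R} \<subseteq> {R \<in> Pow {..<L}. P R} \<union> insert L ` {R \<in> Pow {..<L}. P (insert L R)}"
  proof
    fix R assume R: "R \<in> {R \<in> Pow {..<Suc L}. P R}"
    show "R \<in> {R \<in> Pow {..<L}. P R} \<union> insert L ` {R \<in> Pow {..<L}. P (insert L R)}"
    proof (cases "L \<in> R")
      case True
      then have "R = insert L (R - {L})" by auto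
      moreover have "R - {L} \<in> Pow {..<L}" using R by auto
      ultimately show ?thesis using R by (metis (mono_tags, lifting) UnI2 image_eqI mem_Collect_eq)
    next
      case False
      then have "R \<in> Pow {..<L}" using R by (auto simp: less_Suc_eq)
      then show ?thesis using R by auto
    qed
  qed
  then have "card {R \<in> Pow {..<Suc L}. P R} \<le> card ({R \<in> Pow {..<L}. P R} \<union> insert L ` {R \<in> Pow {..<L}. P (insert L R)})"
    by (intro card_mono) auto
  also have "\<dots> \<le> card {R \<in> Pow {..<L}. P R} + card (insert L ` {R \<in> Pow {..<L}. P (insert L R)})"
    by (rule card_Un_le)
  also have "card (insert L ` {R \<in> Pow {..<L}. P (insert L R)}) \<le> card {R \<in> Pow {..<L}. P (insert L R)}"
    by (rule card_image_le) auto
  finally show ?thesis by simp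
qed

lemma walk_bound:
  assumes D: "\<And>l. \<bar>c l\<bar> \<le> D" and r: "0 \<le> r"
  shows "real (card {R \<in> Pow {..<L}. conf c r R L}) * (\<Sum>l<L. (c l)\<^sup>2) \<le> 2 ^ L * (r + D)\<^sup>2"
proof -
  define Q where "Q L = (\<Sum>R\<in>Pow {..<L}. Fst c r R L)" for L
  define C where "C L = real (card {R \<in> Pow {..<L}. conf c r R L})" for L
  have rec: "Q (Suc L) = 2 * Q L + 2 * (c L)\<^sup>2 * C L" for L
  proof -
    have "Q (Suc L) = (\<Sum>R\<in>Pow {..<L}. Fst c r R (Suc L) + Fst c r (insert L R) (Suc L))"
      unfolding Q_def by (simp add: Pow_Suc_split sum.distrib)
    also have "\<dots> = (\<Sum>R\<in>Pow {..<L}. 2 * Fst c r R L + 2 * (c L)\<^sup>2 * (if conf c r R L then 1 else 0))"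
    proof (rule sum.cong)
      fix R assume R: "R \<in> Pow {..<L}"
      then have LR: "L \<notin> R" by auto
      have ci: "conf c r (insert L R) L = conf c r R L" by (rule conf_insert) simp
      have fi: "Fst c r (insert L R) L = Fst c r R L" by (rule Fst_insert) simp
      show "Fst c r R (Suc L) + Fst c r (insert L R) (Suc L) = 2 * Fst c r R L + 2 * (c L)\<^sup>2 * (if conf c r R L then 1 else 0)"
      proof (cases "conf c r R L")
        case True
        have e1: "Sw c R (Suc L) = Sw c R L + c L" using LR by (simp add: Sw_Suc)
        have e2: "Sw c (insert L R) (Suc L) = Sw c R L - c L" using Sw_insert[of L L c R] by (simp add: Sw_Suc)
        have f1: "Fst c r R (Suc L) = (Sw c R L + c L)\<^sup>2" using True e1 by simp
        have f2: "Fst c r (insert L R) (Suc L) = (Sw c R L - c L)\<^sup>2" using True ci e2 by simp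
        have f3: "Fst c r R L = (Sw c R L)\<^sup>2" using True by (rule Fst_conf)
        have alg: "(a + b)\<^sup>2 + (a - b)\<^sup>2 = 2 * a\<^sup>2 + 2 * b\<^sup>2 * 1" for a b :: real
          by (simp add: power2_eq_square algebra_simps)
        show ?thesis unfolding f1 f2 f3 using True alg by simp
      next
        case False
        then show ?thesis using ci fi by simp
      qed
    qed simp
    also have "\<dots> = 2 * Q L + 2 * (c L)\<^sup>2 * C L"
      unfolding Q_def C_def by (simp add: sum.distrib sum_distrib_left[symmetric] sum.If_cases Int_def)
    finally show ?thesis .
  qed
  have Cmono: "C (Suc L) \<le> 2 * C L" for L
  proof -
    have "card {R \<in> Pow {..<Suc L}. conf c r R (Suc L)} \<le> card {R \<in> Pow {..<L}. conf c r R (Suc L)} + card {R \<in> Pow {..<L}. conf c r (insert L R) (Suc L)}"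
      by (rule card_Pow_Suc_split)
    also have "card {R \<in> Pow {..<L}. conf c r R (Suc L)} \<le> card {R \<in> Pow {..<L}. conf c r R L}"
      by (intro card_mono) (auto simp: conf_Suc)
    also have "card {R \<in> Pow {..<L}. conf c r (insert L R) (Suc L)} \<le> card {R \<in> Pow {..<L}. conf c r R L}"
      by (intro card_mono) (auto simp: conf_Suc conf_insert)
    finally show ?thesis unfolding C_def by linarith
  qed
  have C0: "0 \<le> C L" for L unfolding C_def by simp
  have main: "C L * (\<Sum>l<L. (c l)\<^sup>2) \<le> Q L" for L
  proof (induction L)
    case 0 then show ?case unfolding Q_def C_def by simp
  next
    case (Suc L)
    have "C (Suc L) * (\<Sum>l<Suc L. (c l)\<^sup>2) \<le> (2 * C L) * (\<Sum>l<Suc L. (c l)\<^sup>2)"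
    proof (rule mult_right_mono)
      show "C (Suc L) \<le> 2 * C L" by (rule Cmono)
      show "0 \<le> (\<Sum>l<Suc L. (c l)\<^sup>2)" by (intro sum_nonneg) simp
    qed
    also have "\<dots> = 2 * (C L * (\<Sum>l<L. (c l)\<^sup>2)) + 2 * (c L)\<^sup>2 * C L" by (simp add: algebra_simps)
    also have "\<dots> \<le> 2 * Q L + 2 * (c L)\<^sup>2 * C L" using Suc by simp
    also have "\<dots> = Q (Suc L)" using rec by simp
    finally show ?case .
  qed
  have "Q L \<le> (\<Sum>R\<in>Pow {..<L}. (r + D)\<^sup>2)" unfolding Q_def by (intro sum_mono Fst_bound[OF D r])
  also have "\<dots> = 2 ^ L * (r + D)\<^sup>2" by (simp add: card_Pow)
  finally show ?thesis using main[of L] unfolding C_def by simp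
qed



definition tau :: "nat \<Rightarrow> nat \<Rightarrow> nat set \<Rightarrow> nat \<Rightarrow> nat" where
  "tau L h R i = (if i < L \<and> i \<in> R then i + h else if h \<le> i \<and> i < h + L \<and> i - h \<in> R then i - h else i)"

definition fl :: "nat \<Rightarrow> nat \<Rightarrow> nat \<Rightarrow> nat set \<Rightarrow> nat set \<Rightarrow> nat set" where
  "fl n L h R S = {i. i < n \<and> tau L h R i \<in> S}"

definition cc :: "nat \<Rightarrow> (nat \<Rightarrow> real) \<Rightarrow> nat set \<Rightarrow> nat \<Rightarrow> real" where
  "cc h x S l = ((if l + h \<in> S then 1 else 0) - (if l \<in> S then 1 else 0)) * (x l - x (l + h))"

lemma tau_inv: "L \<le> h \<Longrightarrow> tau L h R (tau L h R i) = i"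
  unfolding tau_def by auto

lemma tau_lt: "L \<le> h \<Longrightarrow> L + h = n \<Longrightarrow> i < n \<Longrightarrow> tau L h R i < n"
  unfolding tau_def by auto

lemma fl_fl:
  assumes a: "L \<le> h" "L + h = n" "S \<subseteq> {..<n}"
  shows "fl n L h R (fl n L h R S) = S"
proof (rule set_eqI)
  fix i
  have "i \<in> fl n L h R (fl n L h R S) \<longleftrightarrow> i < n \<and> tau L h R (tau L h R i) \<in> S"
    unfolding fl_def using tau_lt[OF a(1,2)] by auto
  also have "\<dots> \<longleftrightarrow> i \<in> S" using tau_inv[OF a(1)] a(3) by auto
  finally show "i \<in> fl n L h R (fl n L h R S) \<longleftrightarrow> i \<in> S" .
qed

lemma fl_img:
  assumes a: "L \<le> h" "L + h = n" "S \<subseteq> {..<n}"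
  shows "fl n L h R S = tau L h R ` S"
proof (rule set_eqI)
  fix i
  show "i \<in> fl n L h R S \<longleftrightarrow> i \<in> tau L h R ` S"
  proof
    assume "i \<in> fl n L h R S"
    then have "tau L h R i \<in> S" unfolding fl_def by auto
    then show "i \<in> tau L h R ` S" using tau_inv[OF a(1)] by (metis image_eqI)
  next
    assume "i \<in> tau L h R ` S"
    then obtain j where j: "j \<in> S" "i = tau L h R j" by auto
    then have "tau L h R i = j" using tau_inv[OF a(1)] by simp
    moreover have "i < n" using j a tau_lt[OF a(1,2)] by auto
    ultimately show "i \<in> fl n L h R S" using j unfolding fl_def by auto
  qed
qed

lemma fl_K:
  assumes "L \<le> h" "L + h = n" "S \<in> Ks n k"
  shows "fl n L h R S \<in> Ks n k"
proof -
  have S: "S \<subseteq> {..<n}" "card S = k" using assms(3) unfolding Ks_def by auto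
  have "inj_on (tau L h R) S" by (rule inj_onI) (metis tau_inv assms(1))
  then have "card (tau L h R ` S) = k" using S by (simp add: card_image)
  moreover have "fl n L h R S \<subseteq> {..<n}" by (auto simp: fl_def)
  ultimately show ?thesis using fl_img[OF assms(1,2) S(1)] unfolding Ks_def by auto
qed

lemma cc_fl:
  assumes "L \<le> h" "L + h = n" "l < L"
  shows "cc h x (fl n L h R S) l = (if l \<in> R then - cc h x S l else cc h x S l)"
proof -
  have "l < n" "l + h < n" using assms by auto
  moreover have "tau L h R l = (if l \<in> R then l + h else l)" using assms unfolding tau_def by auto
  moreover have "tau L h R (l + h) = (if l \<in> R then l else l + h)" using assms unfolding tau_def by auto
  ultimately show ?thesis unfolding cc_def fl_def by (auto simp: algebra_simps)
qed

lemma sum_split3: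
  fixes L h n :: nat and g :: "nat \<Rightarrow> 'a::comm_monoid_add"
  assumes "L \<le> h" "L + h = n"
  shows "(\<Sum>i<n. g i) = (\<Sum>l<L. g l) + (\<Sum>l<L. g (l + h)) + (\<Sum>i\<in>{L..<h}. g i)"
proof -
  have "{..<n} = {..<L} \<union> {L..<h} \<union> {h..<h+L}" using assms by auto
  moreover have "sum g ({..<L} \<union> {L..<h}) = sum g {..<L} + sum g {L..<h}"
    by (rule sum.union_disjoint) auto
  moreover have "sum g ({..<L} \<union> {L..<h} \<union> {h..<h+L}) = sum g ({..<L} \<union> {L..<h}) + sum g {h..<h+L}"
    by (rule sum.union_disjoint) (use assms in auto)
  ultimately have "(\<Sum>i<n. g i) = (\<Sum>i<L. g i) + (\<Sum>i\<in>{L..<h}. g i) + (\<Sum>i\<in>{h..<h+L}. g i)"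
    by simp
  moreover have "(\<Sum>i\<in>{h..<h+L}. g i) = (\<Sum>l<L. g (l + h))"
    using sum.shift_bounds_nat_ivl[of g 0 h L] by (simp add: lessThan_atLeast0 add.commute)
  ultimately show ?thesis by (simp add: add.commute add.left_commute add.assoc)
qed

lemma sum_indic:
  fixes x :: "nat \<Rightarrow> real"
  assumes "S \<subseteq> {..<n}"
  shows "sum x S = (\<Sum>i<n. if i \<in> S then x i else 0)"
proof -
  have "{..<n} \<inter> S = S" using assms by auto
  then show ?thesis using sum.inter_restrict[OF finite_lessThan, where g=x and B=S, of n] by simp
qed

lemma sum_fl:
  fixes x :: "nat \<Rightarrow> real"
  assumes "L \<le> h" "L + h = n" "S \<subseteq> {..<n}"
  shows "sum x (fl n L h R S) - sum x S = (\<Sum>l<L. if l \<in> R then cc h x S l else 0)"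
proof -
  define g where "g i = (if tau L h R i \<in> S then x i else 0) - (if i \<in> S then x i else 0)" for i
  have fS: "fl n L h R S \<subseteq> {..<n}" unfolding fl_def by auto
  have "sum x (fl n L h R S) = (\<Sum>i<n. if i \<in> fl n L h R S then x i else 0)" by (rule sum_indic[OF fS])
  also have "\<dots> = (\<Sum>i<n. if tau L h R i \<in> S then x i else 0)" by (intro sum.cong) (auto simp: fl_def)
  finally have "sum x (fl n L h R S) - sum x S = (\<Sum>i<n. g i)"
    unfolding sum_indic[OF assms(3)] g_def by (simp add: sum_subtractf)
  also have "\<dots> = (\<Sum>l<L. g l) + (\<Sum>l<L. g (l + h)) + (\<Sum>i\<in>{L..<h}. g i)" by (rule sum_split3[OF assms(1,2)])
  also have "(\<Sum>i\<in>{L..<h}. g i) = 0"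
    by (intro sum.neutral) (auto simp: g_def tau_def)
  also have "(\<Sum>l<L. g l) + (\<Sum>l<L. g (l + h)) = (\<Sum>l<L. g l + g (l + h))" by (simp add: sum.distrib)
  also have "\<dots> = (\<Sum>l<L. if l \<in> R then cc h x S l else 0)"
  proof (rule sum.cong)
    fix l assume "l \<in> {..<L}"
    then have l: "l < L" by simp
    have "tau L h R l = (if l \<in> R then l + h else l)" using l assms unfolding tau_def by auto
    moreover have "tau L h R (l + h) = (if l \<in> R then l else l + h)" using l assms unfolding tau_def by auto
    ultimately show "g l + g (l + h) = (if l \<in> R then cc h x S l else 0)"
      unfolding g_def cc_def by (auto simp: algebra_simps)
  qed simp
  finally show ?thesis by simp
qed



definition Ps :: "nat \<Rightarrow> (nat \<Rightarrow> real) \<Rightarrow> nat set \<Rightarrow> nat \<Rightarrow> real" where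
  "Ps h x S t = (\<Sum>l<t. cc h x S l)"

lemma Ps_fl:
  assumes "L \<le> h" "L + h = n" "t \<le> L"
  shows "Ps h x (fl n L h R S) t = Sw (cc h x S) R t"
  unfolding Ps_def Sw_def using assms by (intro sum.cong) (auto simp: cc_fl)

lemma Ps_fl_prefix:
  assumes "L \<le> h" "L + h = n" "s \<le> t" "t \<le> L"
  shows "Ps h x (fl n L h {..<t} S) s = - Ps h x S s"
proof -
  have "Ps h x (fl n L h {..<t} S) s = Sw (cc h x S) {..<t} s" using assms by (intro Ps_fl) auto
  also have "\<dots> = (\<Sum>l<s. - cc h x S l)" unfolding Sw_def using assms by (intro sum.cong) auto
  finally show ?thesis unfolding Ps_def by (simp add: sum_negf)
qed

lemma sum_fl_prefix:
  fixes x :: "nat \<Rightarrow> real"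
  assumes "L \<le> h" "L + h = n" "S \<subseteq> {..<n}" "t \<le> L"
  shows "sum x (fl n L h {..<t} S) - sum x S = Ps h x S t"
proof -
  have "sum x (fl n L h {..<t} S) - sum x S = (\<Sum>l<L. if l \<in> {..<t} then cc h x S l else 0)"
    using assms by (intro sum_fl) auto
  also have "\<dots> = (\<Sum>l\<in>{..<L} \<inter> {..<t}. cc h x S l)" by (simp add: sum.inter_restrict)
  also have "{..<L} \<inter> {..<t} = {..<t}" using assms by auto
  finally show ?thesis unfolding Ps_def by simp
qed

lemma involution_bound:
  fixes x :: "nat \<Rightarrow> real" and z \<theta> :: real
  assumes Lh: "L \<le> h" "L + h = n"
  defines "K \<equiv> Ks n (n div 2)"
  defines "A \<equiv> {S \<in> K. \<bar>sum x S - z\<bar> \<le> \<theta>}"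
  defines "B \<equiv> {S \<in> K. \<forall>t\<le>L. \<bar>Ps h x S t\<bar> \<le> 2 * \<theta>}"
  shows "card A \<le> (card K - card A) + card B"
proof -
  define P where "P S t \<longleftrightarrow> t \<le> L \<and> 2 * \<theta> < \<bar>Ps h x S t\<bar>" for S t
  define T where "T S = (LEAST t. P S t)" for S
  define psi where "psi S = fl n L h {..<T S} S" for S
  have finK: "finite K" unfolding K_def by (rule Ks_finite)
  have KB: "S \<in> K - B \<Longrightarrow> \<exists>t. P S t" for S unfolding B_def P_def by auto
  have TP: "S \<in> K - B \<Longrightarrow> P S (T S)" for S unfolding T_def using KB by (metis LeastI_ex)
  have Tmin: "S \<in> K - B \<Longrightarrow> s < T S \<Longrightarrow> \<not> P S s" for S s unfolding T_def using not_less_Least by blast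
  have Ksub: "S \<in> K \<Longrightarrow> S \<subseteq> {..<n}" for S unfolding K_def Ks_def by auto
  have props: "psi S \<in> K - B \<and> T (psi S) = T S \<and> psi (psi S) = S \<and> 2 * \<theta> < \<bar>sum x (psi S) - sum x S\<bar>"
    if S: "S \<in> K - B" for S
  proof -
    let ?t = "T S"
    have tL: "?t \<le> L" using TP[OF S] unfolding P_def by auto
    have neg: "s \<le> ?t \<Longrightarrow> Ps h x (psi S) s = - Ps h x S s" for s
      unfolding psi_def using Lh tL by (intro Ps_fl_prefix) auto
    have PP: "s \<le> ?t \<Longrightarrow> P (psi S) s = P S s" for s unfolding P_def using neg by auto
    have pK: "psi S \<in> K" unfolding psi_def using Lh S unfolding K_def by (auto intro: fl_K)
    have Tpsi0: "(LEAST t. P (psi S) t) = ?t"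
    proof (rule Least_equality)
      show "P (psi S) ?t" using PP TP[OF S] by simp
      fix s assume "P (psi S) s"
      show "?t \<le> s"
      proof (rule ccontr)
        assume "\<not> ?t \<le> s"
        then have "s < ?t" by simp
        then have "P S s" using PP \<open>P (psi S) s\<close> by simp
        then show False using Tmin[OF S \<open>s < ?t\<close>] by simp
      qed
    qed
    have Tpsi: "T (psi S) = ?t" using Tpsi0 unfolding T_def by simp
    have pB: "psi S \<notin> B" using TP[OF S] PP[of ?t] unfolding B_def P_def by auto
    have "psi (psi S) = fl n L h {..<?t} (fl n L h {..<?t} S)" using Tpsi unfolding psi_def by simp
    also have "\<dots> = S" using Lh Ksub S by (intro fl_fl) auto
    finally have pp: "psi (psi S) = S" .
    have "sum x (psi S) - sum x S = Ps h x S ?t" unfolding psi_def using Lh Ksub S tL by (intro sum_fl_prefix) auto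
    then have "2 * \<theta> < \<bar>sum x (psi S) - sum x S\<bar>" using TP[OF S] unfolding P_def by simp
    then show ?thesis using pK pB Tpsi pp by simp
  qed
  have inj: "inj_on psi (A - B)"
  proof (rule inj_onI)
    fix S S' assume a: "S \<in> A - B" "S' \<in> A - B" "psi S = psi S'"
    have "S \<in> K - B" "S' \<in> K - B" using a(1,2) unfolding A_def by auto
    then have "psi (psi S) = S" "psi (psi S') = S'" using props by blast+
    then show "S = S'" using a(3) by metis
  qed
  have img: "psi ` (A - B) \<subseteq> K - A"
  proof
    fix S' assume "S' \<in> psi ` (A - B)"
    then obtain S where S: "S \<in> A - B" "S' = psi S" by auto
    have SKB: "S \<in> K - B" using S unfolding A_def by auto
    have "\<bar>sum x S - z\<bar> \<le> \<theta>" using S unfolding A_def by auto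
    moreover have "2 * \<theta> < \<bar>sum x S' - sum x S\<bar>" using props[OF SKB] S by simp
    ultimately have "\<not> \<bar>sum x S' - z\<bar> \<le> \<theta>" by linarith
    then show "S' \<in> K - A" using props[OF SKB] S unfolding A_def by auto
  qed
  have "card (A - B) \<le> card (K - A)"
    using card_inj_on_le[OF inj img] finK by auto
  moreover have "card (K - A) = card K - card A" using finK unfolding A_def by (intro card_Diff_subset) auto
  moreover have "card A \<le> card (A - B) + card B"
  proof -
    have "A \<subseteq> (A - B) \<union> B" by auto
    then have "card A \<le> card ((A - B) \<union> B)" using finK unfolding A_def B_def by (intro card_mono) auto
    also have "\<dots> \<le> card (A - B) + card B" by (rule card_Un_le)
    finally show ?thesis .
  qed
  ultimately show ?thesis by linarith
qed



lemma double_count: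
  assumes "finite X" "finite Y"
  shows "(\<Sum>a\<in>X. card {b\<in>Y. Q a b}) = (\<Sum>b\<in>Y. card {a\<in>X. Q a b})"
proof -
  have "(\<Sum>a\<in>X. card {b\<in>Y. Q a b}) = (\<Sum>a\<in>X. \<Sum>b\<in>Y. if Q a b then 1 else 0)"
    using assms by (simp add: sum.If_cases Int_def)
  also have "\<dots> = (\<Sum>b\<in>Y. \<Sum>a\<in>X. if Q a b then 1 else 0)" by (rule sum.swap)
  also have "\<dots> = (\<Sum>b\<in>Y. card {a\<in>X. Q a b})"
    using assms by (simp add: sum.If_cases Int_def)
  finally show ?thesis .
qed

lemma cc_abs: "\<bar>cc h x S l\<bar> \<le> \<bar>x l - x (l + h)\<bar>"
  unfolding cc_def by (auto simp: abs_mult)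

lemma bad_bound:
  fixes x :: "nat \<Rightarrow> real" and \<theta> D \<beta> :: real
  assumes Lh: "L \<le> h" "L + h = n" and D: "\<forall>l<L. \<bar>x l - x (l + h)\<bar> \<le> D" "0 \<le> D"
    and th: "0 \<le> \<theta>" and beta: "0 < \<beta>"
  defines "K \<equiv> Ks n (n div 2)"
  defines "B \<equiv> {S \<in> K. \<forall>t\<le>L. \<bar>Ps h x S t\<bar> \<le> 2 * \<theta>}"
  defines "m \<equiv> (\<lambda>S. \<Sum>l<L. (cc h x S l)\<^sup>2)"
  shows "real (card B) \<le> real (card {S\<in>K. m S < \<beta>}) + real (card K) * (2 * \<theta> + D)\<^sup>2 / \<beta>"
proof -
  have finK: "finite K" unfolding K_def by (rule Ks_finite)
  have Ksub: "S \<in> K \<Longrightarrow> S \<subseteq> {..<n}" for S unfolding K_def Ks_def by auto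
  have flK: "S \<in> K \<Longrightarrow> fl n L h R S \<in> K" for S R unfolding K_def using Lh by (intro fl_K) auto
  have step1: "card {S\<in>K. fl n L h R S \<in> B} = card B" for R
  proof -
    have "{S\<in>K. fl n L h R S \<in> B} = fl n L h R ` B"
    proof
      show "{S\<in>K. fl n L h R S \<in> B} \<subseteq> fl n L h R ` B"
      proof
        fix S assume S: "S \<in> {S\<in>K. fl n L h R S \<in> B}"
        then have "S = fl n L h R (fl n L h R S)" using fl_fl[OF Lh Ksub] by auto
        then show "S \<in> fl n L h R ` B" using S by auto
      qed
      show "fl n L h R ` B \<subseteq> {S\<in>K. fl n L h R S \<in> B}"
      proof
        fix S assume "S \<in> fl n L h R ` B"
        then obtain S' where S': "S' \<in> B" "S = fl n L h R S'" by auto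
        then have "S' \<in> K" unfolding B_def by auto
        then show "S \<in> {S\<in>K. fl n L h R S \<in> B}" using S' flK fl_fl[OF Lh Ksub] by auto
      qed
    qed
    moreover have "inj_on (fl n L h R) B"
    proof (rule inj_onI)
      fix S S' assume "S \<in> B" "S' \<in> B" "fl n L h R S = fl n L h R S'"
      moreover have "S \<in> K" "S' \<in> K" using \<open>S \<in> B\<close> \<open>S' \<in> B\<close> unfolding B_def by auto
      ultimately show "S = S'" using fl_fl[OF Lh Ksub] by metis
    qed
    ultimately show ?thesis by (simp add: card_image)
  qed
  have step3: "fl n L h R S \<in> B \<longleftrightarrow> conf (\<lambda>l. if l < L then cc h x S l else 0) (2 * \<theta>) R L"
    if S: "S \<in> K" for S R
  proof -
    have "Ps h x (fl n L h R S) t = Sw (\<lambda>l. if l < L then cc h x S l else 0) R t" if t: "t \<le> L" for t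
    proof -
      have "Ps h x (fl n L h R S) t = Sw (cc h x S) R t" using Lh t by (rule Ps_fl)
      also have "\<dots> = Sw (\<lambda>l. if l < L then cc h x S l else 0) R t" unfolding Sw_def using t by (intro sum.cong) auto
      finally show ?thesis .
    qed
    then show ?thesis unfolding B_def conf_def using flK[OF S] by auto
  qed
  have step5: "real (card {R \<in> Pow {..<L}. fl n L h R S \<in> B}) \<le> 2 ^ L * ((if m S < \<beta> then 1 else 0) + (2 * \<theta> + D)\<^sup>2 / \<beta>)"
    if S: "S \<in> K" for S
  proof -
    let ?c = "\<lambda>l. if l < L then cc h x S l else 0"
    have set_eq: "{R \<in> Pow {..<L}. fl n L h R S \<in> B} = {R \<in> Pow {..<L}. conf ?c (2 * \<theta>) R L}"
      using step3[OF S] by auto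
    have cb: "\<bar>?c l\<bar> \<le> D" for l using D cc_abs[of h x S l] by (auto intro: order.trans)
    have wb: "real (card {R \<in> Pow {..<L}. conf ?c (2 * \<theta>) R L}) * (\<Sum>l<L. (?c l)\<^sup>2) \<le> 2 ^ L * (2 * \<theta> + D)\<^sup>2"
      by (rule walk_bound) (use cb th in auto)
    have msum: "(\<Sum>l<L. (?c l)\<^sup>2) = m S" unfolding m_def by (intro sum.cong) auto
    have cardle: "real (card {R \<in> Pow {..<L}. fl n L h R S \<in> B}) \<le> 2 ^ L"
    proof -
      have "card {R \<in> Pow {..<L}. fl n L h R S \<in> B} \<le> card (Pow {..<L::nat})" by (intro card_mono) auto
      then show ?thesis by (simp add: card_Pow)
    qed
    show ?thesis
    proof (cases "m S < \<beta>")
      case True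
      have nn: "0 \<le> 2 ^ L * ((2 * \<theta> + D)\<^sup>2 / \<beta>)" using beta by simp
      have eq: "2 ^ L * ((if m S < \<beta> then 1 else 0) + (2 * \<theta> + D)\<^sup>2 / \<beta>) = 2 ^ L + 2 ^ L * ((2 * \<theta> + D)\<^sup>2 / \<beta>)"
        using True by (simp add: distrib_left)
      show ?thesis unfolding eq using nn cardle by linarith
    next
      case False
      let ?C = "real (card {R \<in> Pow {..<L}. fl n L h R S \<in> B})"
      have "?C * \<beta> \<le> ?C * m S" using False by (intro mult_left_mono) auto
      also have "\<dots> \<le> 2 ^ L * (2 * \<theta> + D)\<^sup>2" using wb msum set_eq by simp
      finally have "?C \<le> 2 ^ L * (2 * \<theta> + D)\<^sup>2 / \<beta>" using beta by (simp add: le_divide_eq)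
      then show ?thesis using False by simp
    qed
  qed
  have "2 ^ L * real (card B) = (\<Sum>R\<in>Pow {..<L}. real (card {S\<in>K. fl n L h R S \<in> B}))"
    using step1 by (simp add: card_Pow)
  also have "\<dots> = real (\<Sum>R\<in>Pow {..<L}. card {S\<in>K. fl n L h R S \<in> B})" by simp
  also have "(\<Sum>R\<in>Pow {..<L}. card {S\<in>K. fl n L h R S \<in> B}) = (\<Sum>S\<in>K. card {R\<in>Pow {..<L}. fl n L h R S \<in> B})"
    using finK by (intro double_count) auto
  also have "real \<dots> = (\<Sum>S\<in>K. real (card {R\<in>Pow {..<L}. fl n L h R S \<in> B}))" by simp
  also have "\<dots> \<le> (\<Sum>S\<in>K. 2 ^ L * ((if m S < \<beta> then 1 else 0) + (2 * \<theta> + D)\<^sup>2 / \<beta>))"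
    using step5 by (intro sum_mono) auto
  also have "\<dots> = 2 ^ L * ((\<Sum>S\<in>K. if m S < \<beta> then 1 else 0) + real (card K) * ((2 * \<theta> + D)\<^sup>2 / \<beta>))"
    by (simp add: sum_distrib_left[symmetric] sum.distrib)
  also have "(\<Sum>S\<in>K. if m S < \<beta> then 1 else (0::real)) = real (card {S\<in>K. m S < \<beta>})"
    using finK by (simp add: sum.If_cases Int_def)
  finally have "2 ^ L * real (card B) \<le> 2 ^ L * (real (card {S\<in>K. m S < \<beta>}) + real (card K) * (2 * \<theta> + D)\<^sup>2 / \<beta>)"
    by simp
  then show ?thesis by simp
qed



lemma cc_sq: "(cc h x S l)\<^sup>2 = (if mixed S l (l + h) then (x l - x (l + h))\<^sup>2 else 0)"
  unfolding cc_def mixed_def by (auto simp: power2_eq_square)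

lemma nratio: 
  assumes "8 \<le> n"
  shows "real n * (real n - 1) \<le> (1 + 8 / real n) * ((real n - 2) * (real n - 3))"
proof -
  have n: "8 \<le> real n" using assms by simp
  have h1: "0 \<le> (real n - 8) * (4 * real n - 2)" using n by simp
  have id: "(real n + 8) * ((real n - 2) * (real n - 3)) - real n * (real n * (real n - 1)) = (real n - 8) * (4 * real n - 2) + 32"
    by (simp add: algebra_simps)
  have P: "real n * (real n * (real n - 1)) \<le> (real n + 8) * ((real n - 2) * (real n - 3))"
    using h1 id by linarith
  have eq: "(1 + 8 / real n) * ((real n - 2) * (real n - 3)) = (real n + 8) * ((real n - 2) * (real n - 3)) / real n"
    using n by (simp add: field_simps)
  show ?thesis unfolding eq using P n by (simp add: le_divide_eq mult.commute)
qed

lemma sum_m: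
  fixes w :: "nat \<Rightarrow> real"
  assumes n8: "8 \<le> n"
  defines "L \<equiv> n div 2" and "h \<equiv> n - n div 2" and "K \<equiv> Ks n (n div 2)"
  shows "(\<Sum>S\<in>K. \<Sum>l<L. if mixed S l (l + h) then w l else 0) = (\<Sum>l<L. w l) * real (2 * ((n - 2) choose (n div 2 - 1)))"
proof -
  have "(\<Sum>S\<in>K. \<Sum>l<L. if mixed S l (l + h) then w l else 0) = (\<Sum>l<L. \<Sum>S\<in>K. if mixed S l (l + h) then w l else 0)"
    by (rule sum.swap)
  also have "\<dots> = (\<Sum>l<L. w l * real (card {S\<in>K. mixed S l (l + h)}))"
    using Ks_finite unfolding K_def by (intro sum.cong) (auto simp: sum.If_cases Int_def)
  also have "\<dots> = (\<Sum>l<L. w l * real (2 * ((n - 2) choose (n div 2 - 1))))"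
  proof (rule sum.cong)
    fix l assume "l \<in> {..<L}"
    then have "card {S\<in>K. mixed S l (l + h)} = 2 * ((n - 2) choose (n div 2 - 1))"
      unfolding K_def L_def h_def using n8 by (intro card_mixed1) auto
    then show "w l * real (card {S\<in>K. mixed S l (l + h)}) = w l * real (2 * ((n - 2) choose (n div 2 - 1)))" by simp
  qed simp
  finally show ?thesis by (simp add: sum_distrib_right)
qed

lemma sum_m2:
  fixes w :: "nat \<Rightarrow> real"
  assumes n8: "8 \<le> n" and w0: "\<And>l. 0 \<le> w l"
  defines "L \<equiv> n div 2" and "h \<equiv> n - n div 2" and "K \<equiv> Ks n (n div 2)"
  defines "N1 \<equiv> real (2 * ((n - 2) choose (n div 2 - 1)))" and "N2 \<equiv> real (4 * ((n - 4) choose (n div 2 - 2)))"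
  shows "(\<Sum>S\<in>K. (\<Sum>l<L. if mixed S l (l + h) then w l else 0)\<^sup>2) \<le> N1 * (\<Sum>l<L. (w l)\<^sup>2) + N2 * (\<Sum>l<L. w l)\<^sup>2"
proof -
  let ?a = "\<lambda>S l. if mixed S l (l + h) then w l else 0"
  have "(\<Sum>S\<in>K. (\<Sum>l<L. ?a S l)\<^sup>2) = (\<Sum>S\<in>K. \<Sum>l<L. \<Sum>l'<L. ?a S l * ?a S l')"
    by (simp add: power2_eq_square sum_product)
  also have "\<dots> = (\<Sum>l<L. \<Sum>S\<in>K. \<Sum>l'<L. ?a S l * ?a S l')" by (rule sum.swap)
  also have "\<dots> = (\<Sum>l<L. \<Sum>l'<L. \<Sum>S\<in>K. ?a S l * ?a S l')" by (intro sum.cong refl sum.swap)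
  also have "\<dots> \<le> (\<Sum>l<L. \<Sum>l'<L. w l * w l' * N2 + (if l = l' then (w l)\<^sup>2 * N1 else 0))"
  proof (intro sum_mono)
    fix l l' assume l: "l \<in> {..<L}" and l': "l' \<in> {..<L}"
    have "(\<Sum>S\<in>K. ?a S l * ?a S l') = (\<Sum>S\<in>K. if mixed S l (l + h) \<and> mixed S l' (l' + h) then w l * w l' else 0)"
      by (intro sum.cong) auto
    also have "\<dots> = w l * w l' * real (card {S\<in>K. mixed S l (l + h) \<and> mixed S l' (l' + h)})"
      using Ks_finite unfolding K_def by (simp add: sum.If_cases Int_def)
    also have "\<dots> \<le> w l * w l' * N2 + (if l = l' then (w l)\<^sup>2 * N1 else 0)"
    proof (cases "l = l'")
      case True
      have "{S\<in>K. mixed S l (l + h) \<and> mixed S l' (l' + h)} = {S\<in>K. mixed S l (l + h)}" using True by simp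
      moreover have "card {S\<in>K. mixed S l (l + h)} = 2 * ((n - 2) choose (n div 2 - 1))"
        using l n8 unfolding K_def L_def h_def by (intro card_mixed1) auto
      ultimately have "card {S\<in>K. mixed S l (l + h) \<and> mixed S l' (l' + h)} = 2 * ((n - 2) choose (n div 2 - 1))" by simp
      moreover have "0 \<le> w l * w l' * N2" using w0 unfolding N2_def by simp
      ultimately show ?thesis using True unfolding N1_def by (simp add: power2_eq_square)
    next
      case False
      have "card {S\<in>K. mixed S l (l + h) \<and> mixed S l' (l' + h)} = 4 * ((n - 4) choose (n div 2 - 2))"
        using False l l' n8 unfolding K_def L_def h_def by (intro card_mixed2) auto
      then show ?thesis using False unfolding N2_def by simp
    qed
    finally show "(\<Sum>S\<in>K. ?a S l * ?a S l') \<le> w l * w l' * N2 + (if l = l' then (w l)\<^sup>2 * N1 else 0)" .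
  qed
  also have "\<dots> = N2 * (\<Sum>l<L. w l)\<^sup>2 + N1 * (\<Sum>l<L. (w l)\<^sup>2)"
    by (simp add: sum.distrib power2_eq_square sum_product sum_distrib_left sum_distrib_right algebra_simps)
  finally show ?thesis by simp
qed



lemma cheb:
  fixes w :: "nat \<Rightarrow> real"
  assumes n8: "8 \<le> n" and w0: "\<And>l. 0 \<le> w l" and wD: "\<And>l. l < n div 2 \<Longrightarrow> w l \<le> D2"
    and Tpos: "0 < (\<Sum>l<n div 2. w l)"
  defines "L \<equiv> n div 2" and "h \<equiv> n - n div 2" and "K \<equiv> Ks n (n div 2)"
  defines "m \<equiv> (\<lambda>S. \<Sum>l<L. if mixed S l (l + h) then w l else 0)"
  defines "T \<equiv> (\<Sum>l<L. w l)"
  shows "real (card {S\<in>K. m S < T / 4}) \<le> 16 * real (card K) * (D2 / T + 8 / real n)"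
proof -
  define N where "N = real (card K)"
  define N1 where "N1 = real (2 * ((n - 2) choose (n div 2 - 1)))"
  define N2 where "N2 = real (4 * ((n - 4) choose (n div 2 - 2)))"
  define B0 where "B0 = real (n choose (n div 2))"
  define B1 where "B1 = real ((n - 2) choose (n div 2 - 1))"
  define B2 where "B2 = real ((n - 4) choose (n div 2 - 2))"
  have finK: "finite K" unfolding K_def by (rule Ks_finite)
  have NB0: "N = B0" unfolding N_def B0_def K_def card_Ks by simp
  have N1B1: "N1 = 2 * B1" unfolding N1_def B1_def by simp
  have N2B2: "N2 = 4 * B2" unfolding N2_def B2_def by simp
  have Npos: "0 < N" unfolding NB0 B0_def by simp
  have N_le: "N \<le> 2 * N1" using p_half[OF n8] unfolding NB0 N1B1 B0_def B1_def by simp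
  have N1_le: "N1 \<le> N"
  proof -
    have "card {S\<in>K. mixed S 0 (0 + h)} = 2 * ((n - 2) choose (n div 2 - 1))"
      unfolding K_def h_def using n8 by (intro card_mixed1) auto
    moreover have "card {S\<in>K. mixed S 0 (0 + h)} \<le> card K" using finK by (intro card_mono) auto
    ultimately show ?thesis unfolding N1_def N_def by (metis of_nat_le_iff)
  qed
  have N2_le: "N2 * N \<le> N1\<^sup>2 * (1 + 8 / real n)"
  proof -
    have n8r: "8 \<le> real n" using n8 by simp
    have pos: "0 < (real n - 2) * (real n - 3)" using n8r by simp
    have "B2 * B0 * ((real n - 2) * (real n - 3)) \<le> B1\<^sup>2 * (real n * (real n - 1))"
      using p2_bound[OF n8] n8 unfolding B0_def B1_def B2_def by (simp add: of_nat_diff mult.assoc)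
    also have "\<dots> \<le> B1\<^sup>2 * ((1 + 8 / real n) * ((real n - 2) * (real n - 3)))"
      using nratio[OF n8] by (intro mult_left_mono) auto
    finally have "(B2 * B0) * ((real n - 2) * (real n - 3)) \<le> (B1\<^sup>2 * (1 + 8 / real n)) * ((real n - 2) * (real n - 3))"
      by (simp add: mult.assoc)
    then have "B2 * B0 \<le> B1\<^sup>2 * (1 + 8 / real n)" using pos by (rule mult_right_le_imp_le)
    then have "4 * (B2 * B0) \<le> 4 * (B1\<^sup>2 * (1 + 8 / real n))" by simp
    moreover have "N2 * N = 4 * (B2 * B0)" unfolding N2B2 NB0 by simp
    moreover have "N1\<^sup>2 * (1 + 8 / real n) = 4 * (B1\<^sup>2 * (1 + 8 / real n))" unfolding N1B1 by (simp add: power2_eq_square)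
    ultimately show ?thesis by linarith
  qed
  have Sm: "(\<Sum>S\<in>K. m S) = T * N1" unfolding m_def T_def N1_def L_def h_def K_def by (rule sum_m[OF n8])
  have Sm2: "(\<Sum>S\<in>K. (m S)\<^sup>2) \<le> N1 * (\<Sum>l<L. (w l)\<^sup>2) + N2 * T\<^sup>2"
    unfolding m_def T_def N1_def N2_def L_def h_def K_def by (rule sum_m2[OF n8 w0])
  have Tp: "0 < T" using Tpos unfolding T_def L_def .
  have w2: "(\<Sum>l<L. (w l)\<^sup>2) \<le> D2 * T"
  proof -
    have "(\<Sum>l<L. (w l)\<^sup>2) \<le> (\<Sum>l<L. D2 * w l)"
    proof (rule sum_mono)
      fix l assume "l \<in> {..<L}"
      then have "w l \<le> D2" using wD unfolding L_def by auto
      then show "(w l)\<^sup>2 \<le> D2 * w l" using w0[of l] by (simp add: power2_eq_square mult_right_mono)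
    qed
    then show ?thesis unfolding T_def by (simp add: sum_distrib_left)
  qed
  define mu where "mu = T * N1 / N"
  have var: "(\<Sum>S\<in>K. (m S - mu)\<^sup>2) = (\<Sum>S\<in>K. (m S)\<^sup>2) - T\<^sup>2 * N1\<^sup>2 / N"
  proof -
    have "(\<Sum>S\<in>K. (m S - mu)\<^sup>2) = (\<Sum>S\<in>K. (m S)\<^sup>2 - 2 * mu * m S + mu\<^sup>2)"
      by (intro sum.cong) (auto simp: power2_eq_square algebra_simps)
    also have "\<dots> = (\<Sum>S\<in>K. (m S)\<^sup>2) - 2 * mu * (\<Sum>S\<in>K. m S) + N * mu\<^sup>2"
      unfolding N_def by (simp add: sum.distrib sum_subtractf sum_distrib_left)
    also have "\<dots> = (\<Sum>S\<in>K. (m S)\<^sup>2) - T\<^sup>2 * N1\<^sup>2 / N"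
      unfolding Sm mu_def using Npos by (simp add: field_simps power2_eq_square)
    finally show ?thesis .
  qed
  have varb: "(\<Sum>S\<in>K. (m S - mu)\<^sup>2) \<le> N * D2 * T + 8 * T\<^sup>2 * N / real n"
  proof -
    have a: "N1 * (\<Sum>l<L. (w l)\<^sup>2) \<le> N * (D2 * T)"
    proof -
      have "N1 * (\<Sum>l<L. (w l)\<^sup>2) \<le> N * (\<Sum>l<L. (w l)\<^sup>2)"
        using N1_le by (intro mult_right_mono) (auto intro: sum_nonneg)
      also have "\<dots> \<le> N * (D2 * T)" using w2 Npos by (intro mult_left_mono) auto
      finally show ?thesis .
    qed
    have b: "N2 * T\<^sup>2 - T\<^sup>2 * N1\<^sup>2 / N \<le> 8 * T\<^sup>2 * N / real n"
    proof -
      have "N2 \<le> N1\<^sup>2 * (1 + 8 / real n) / N" using N2_le Npos by (simp add: le_divide_eq)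
      moreover have "N1\<^sup>2 * (1 + 8 / real n) / N = N1\<^sup>2 / N + N1\<^sup>2 * (8 / real n) / N"
        by (simp add: distrib_left add_divide_distrib)
      ultimately have "N2 - N1\<^sup>2 / N \<le> N1\<^sup>2 * (8 / real n) / N" by linarith
      also have "\<dots> \<le> N\<^sup>2 * (8 / real n) / N"
      proof -
        have "N1\<^sup>2 \<le> N\<^sup>2" using N1_le N1_def by (intro power_mono) auto
        then show ?thesis using Npos by (intro divide_right_mono mult_right_mono) auto
      qed
      also have "\<dots> = 8 * N / real n" using Npos by (simp add: power2_eq_square)
      finally have "N2 - N1\<^sup>2 / N \<le> 8 * N / real n" .
      then have "T\<^sup>2 * (N2 - N1\<^sup>2 / N) \<le> T\<^sup>2 * (8 * N / real n)" by (intro mult_left_mono) auto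
      then show ?thesis by (simp add: algebra_simps)
    qed
    show ?thesis using var Sm2 a b by (simp add: algebra_simps)
  qed
  have muge: "T / 2 \<le> mu" unfolding mu_def using N_le Npos Tp by (simp add: field_simps)
  have cnt: "real (card {S\<in>K. m S < T / 4}) * (T / 4)\<^sup>2 \<le> (\<Sum>S\<in>K. (m S - mu)\<^sup>2)"
  proof -
    have "real (card {S\<in>K. m S < T / 4}) * (T / 4)\<^sup>2 = (\<Sum>S\<in>{S\<in>K. m S < T / 4}. (T / 4)\<^sup>2)" by simp
    also have "\<dots> \<le> (\<Sum>S\<in>{S\<in>K. m S < T / 4}. (m S - mu)\<^sup>2)"
    proof (rule sum_mono)
      fix S assume "S \<in> {S\<in>K. m S < T / 4}"
      then have "T / 4 \<le> mu - m S" using muge by simp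
      moreover have "0 \<le> T / 4" using Tp by simp
      ultimately have "(T / 4)\<^sup>2 \<le> (mu - m S)\<^sup>2" by (intro power_mono) auto
      then show "(T / 4)\<^sup>2 \<le> (m S - mu)\<^sup>2" by (simp add: power2_commute)
    qed
    also have "\<dots> \<le> (\<Sum>S\<in>K. (m S - mu)\<^sup>2)" using finK by (intro sum_mono2) auto
    finally show ?thesis .
  qed
  have "real (card {S\<in>K. m S < T / 4}) * (T\<^sup>2 / 16) \<le> N * D2 * T + 8 * T\<^sup>2 * N / real n"
    using cnt varb by (simp add: power_divide)
  also have "\<dots> = (16 * N * (D2 / T + 8 / real n)) * (T\<^sup>2 / 16)"
    using Tp n8 by (simp add: field_simps power2_eq_square)
  finally have "real (card {S\<in>K. m S < T / 4}) * (T\<^sup>2 / 16) \<le> (16 * N * (D2 / T + 8 / real n)) * (T\<^sup>2 / 16)" .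
  then have "real (card {S\<in>K. m S < T / 4}) \<le> 16 * N * (D2 / T + 8 / real n)"
    by (rule mult_right_le_imp_le) (use Tp in simp)
  then show ?thesis unfolding N_def .
qed



lemma T_lower:
  fixes x :: "nat \<Rightarrow> real"
  assumes n8: "8 \<le> n" and sorted: "\<And>i j. i \<le> j \<Longrightarrow> j < n \<Longrightarrow> x i \<le> x j"
    and norm: "(\<Sum>i<n. (x i)\<^sup>2) = 1" and sum: "(\<Sum>i<n. x i)\<^sup>2 \<le> real n / 4"
  shows "3 / 4 \<le> (\<Sum>l<n div 2. (x l - x (l + (n - n div 2)))\<^sup>2)"
proof -
  define L where "L = n div 2"
  define h where "h = n - n div 2"
  define M where "M = x (h - 1)"
  have Lh: "L \<le> h" "L + h = n" "h \<le> L + 1" "1 \<le> h" unfolding L_def h_def using n8 by auto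
  define g where "g i = (x i - M)\<^sup>2" for i
  have split: "(\<Sum>i<n. g i) = (\<Sum>l<L. g l) + (\<Sum>l<L. g (l + h)) + (\<Sum>i\<in>{L..<h}. g i)"
    by (rule sum_split3[OF Lh(1,2)])
  have mid: "(\<Sum>i\<in>{L..<h}. g i) = 0"
  proof (rule sum.neutral, rule ballI)
    fix i assume "i \<in> {L..<h}"
    then have "i = h - 1" using Lh by auto
    then show "g i = 0" unfolding g_def M_def by simp
  qed
  have pair: "g l + g (l + h) \<le> (x l - x (l + h))\<^sup>2" if l: "l < L" for l
  proof -
    have a: "x l \<le> M" unfolding M_def using l Lh by (intro sorted) auto
    have b: "M \<le> x (l + h)" unfolding M_def using l Lh by (intro sorted) auto
    have "(x l - x (l + h))\<^sup>2 = (M - x l)\<^sup>2 + (x (l + h) - M)\<^sup>2 + 2 * ((M - x l) * (x (l + h) - M))"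
      by (simp add: power2_eq_square algebra_simps)
    moreover have "0 \<le> (M - x l) * (x (l + h) - M)" using a b by simp
    ultimately show ?thesis unfolding g_def by (simp add: power2_commute)
  qed
  have "(\<Sum>i<n. g i) \<le> (\<Sum>l<L. (x l - x (l + h))\<^sup>2)"
  proof -
    have "(\<Sum>i<n. g i) = (\<Sum>l<L. g l + g (l + h))" using split mid by (simp add: sum.distrib)
    also have "\<dots> \<le> (\<Sum>l<L. (x l - x (l + h))\<^sup>2)" using pair by (intro sum_mono) auto
    finally show ?thesis .
  qed
  moreover have "3 / 4 \<le> (\<Sum>i<n. g i)"
  proof -
    let ?s = "\<Sum>i<n. x i"
    have "(\<Sum>i<n. g i) = (\<Sum>i<n. (x i)\<^sup>2) - 2 * M * ?s + real n * M\<^sup>2"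
      unfolding g_def by (simp add: power2_eq_square algebra_simps sum.distrib sum_subtractf sum_distrib_left)
    also have "\<dots> = 1 - 2 * M * ?s + real n * M\<^sup>2" using norm by simp
    finally have e: "(\<Sum>i<n. g i) = 1 - 2 * M * ?s + real n * M\<^sup>2" .
    have np: "0 < real n" using n8 by simp
    have "0 \<le> (real n * M - ?s)\<^sup>2" by simp
    then have "0 \<le> real n * (real n * M\<^sup>2 - 2 * M * ?s) + ?s\<^sup>2" by (simp add: power2_eq_square algebra_simps)
    then have "- (?s\<^sup>2) \<le> real n * (real n * M\<^sup>2 - 2 * M * ?s)" by linarith
    moreover have "- (real n / 4) \<le> - (?s\<^sup>2)" using sum by simp
    ultimately have "real n * (- 1 / 4) \<le> real n * (real n * M\<^sup>2 - 2 * M * ?s)" by simp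
    then have "- 1 / 4 \<le> real n * M\<^sup>2 - 2 * M * ?s" by (rule mult_left_le_imp_le) (use np in simp)
    then show ?thesis using e by linarith
  qed
  ultimately show ?thesis unfolding L_def h_def by simp
qed

lemma caseII_sorted:
  fixes x :: "nat \<Rightarrow> real" and z \<theta> :: real
  assumes n8: "8 \<le> n" and sorted: "\<And>i j. i \<le> j \<Longrightarrow> j < n \<Longrightarrow> x i \<le> x j"
    and norm: "(\<Sum>i<n. (x i)\<^sup>2) = 1" and sum: "(\<Sum>i<n. x i)\<^sup>2 \<le> real n / 4"
    and small: "\<And>i. i < n \<Longrightarrow> \<bar>x i\<bar> < 4 * \<theta>" and th: "0 < \<theta>"
  shows "real (card {S \<in> Ks n (n div 2). \<bar>sum x S - z\<bar> \<le> \<theta>}) \<le> (1/2 + 1000 * \<theta>\<^sup>2 + 64 / real n) * real (card (Ks n (n div 2)))"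
proof -
  define L where "L = n div 2"
  define h where "h = n - n div 2"
  define K where "K = Ks n (n div 2)"
  define A where "A = {S \<in> K. \<bar>sum x S - z\<bar> \<le> \<theta>}"
  define B where "B = {S \<in> K. \<forall>t\<le>L. \<bar>Ps h x S t\<bar> \<le> 2 * \<theta>}"
  define w where "w l = (x l - x (l + h))\<^sup>2" for l
  define T where "T = (\<Sum>l<L. w l)"
  define m where "m S = (\<Sum>l<L. (cc h x S l)\<^sup>2)" for S
  define N where "N = real (card K)"
  have Lh: "L \<le> h" "L + h = n" unfolding L_def h_def by auto
  have T34: "3 / 4 \<le> T" unfolding T_def w_def L_def h_def by (rule T_lower[OF n8 sorted norm sum])
  have Dl: "\<forall>l<L. \<bar>x l - x (l + h)\<bar> \<le> 8 * \<theta>"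
  proof (intro allI impI)
    fix l assume "l < L"
    then have "l < n" "l + h < n" using Lh by auto
    then have "\<bar>x l\<bar> < 4 * \<theta>" "\<bar>x (l + h)\<bar> < 4 * \<theta>" using small by auto
    then show "\<bar>x l - x (l + h)\<bar> \<le> 8 * \<theta>" by linarith
  qed
  have Tpos: "0 < T" using T34 by simp
  have bad: "real (card B) \<le> real (card {S\<in>K. m S < T / 4}) + N * (2 * \<theta> + 8 * \<theta>)\<^sup>2 / (T / 4)"
    unfolding B_def K_def m_def N_def using Lh Dl th Tpos by (intro bad_bound) auto
  have meq: "m S = (\<Sum>l<L. if mixed S l (l + h) then w l else 0)" for S
    unfolding m_def w_def by (simp add: cc_sq)
  have ch: "real (card {S\<in>K. m S < T / 4}) \<le> 16 * N * (64 * \<theta>\<^sup>2 / T + 8 / real n)"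
  proof -
    have w0: "0 \<le> w l" for l unfolding w_def by simp
    have wD: "l < n div 2 \<Longrightarrow> w l \<le> 64 * \<theta>\<^sup>2" for l
    proof -
      assume "l < n div 2"
      then have "\<bar>x l - x (l + h)\<bar> \<le> 8 * \<theta>" using Dl unfolding L_def by auto
      then have "(x l - x (l + h))\<^sup>2 \<le> (8 * \<theta>)\<^sup>2" by (metis abs_le_square_iff abs_of_nonneg abs_ge_zero order.trans)
      then show ?thesis unfolding w_def by (simp add: power_mult_distrib)
    qed
    have "real (card {S\<in>K. (\<Sum>l<L. if mixed S l (l + h) then w l else 0) < T / 4}) \<le> 16 * N * (64 * \<theta>\<^sup>2 / T + 8 / real n)"
      unfolding K_def N_def T_def L_def h_def using Tpos unfolding T_def L_def
      by (intro cheb[OF n8 w0 wD]) auto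
    then show ?thesis using meq by simp
  qed
  have inv: "card A \<le> (card K - card A) + card B"
    unfolding A_def B_def K_def using Lh by (intro involution_bound) auto
  have AK: "card A \<le> card K" unfolding A_def using Ks_finite K_def by (intro card_mono) auto
  have inv': "2 * real (card A) \<le> N + real (card B)"
  proof -
    have "real (card A) \<le> real (card K) - real (card A) + real (card B)" using inv AK by (simp add: of_nat_diff)
    then show ?thesis unfolding N_def by simp
  qed
  have N0: "0 \<le> N" unfolding N_def by simp
  have e1: "N * (2 * \<theta> + 8 * \<theta>)\<^sup>2 / (T / 4) = 400 * \<theta>\<^sup>2 * N / T" using Tpos by (simp add: power2_eq_square field_simps)
  have e2: "400 * \<theta>\<^sup>2 * N / T \<le> 400 * \<theta>\<^sup>2 * N * (4 / 3)"
  proof -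
    have "1 / T \<le> 4 / 3" using T34 by (simp add: divide_le_eq)
    then have "400 * \<theta>\<^sup>2 * N * (1 / T) \<le> 400 * \<theta>\<^sup>2 * N * (4 / 3)" using N0 by (intro mult_left_mono) auto
    then show ?thesis by simp
  qed
  have e3: "16 * N * (64 * \<theta>\<^sup>2 / T + 8 / real n) \<le> 16 * N * (64 * \<theta>\<^sup>2 * (4 / 3) + 8 / real n)"
  proof -
    have "1 / T \<le> 4 / 3" using T34 by (simp add: divide_le_eq)
    then have "64 * \<theta>\<^sup>2 * (1 / T) \<le> 64 * \<theta>\<^sup>2 * (4 / 3)" by (intro mult_left_mono) auto
    then have "64 * \<theta>\<^sup>2 / T \<le> 64 * \<theta>\<^sup>2 * (4 / 3)" by simp
    then show ?thesis using N0 by (intro mult_left_mono) auto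
  qed
  have "2 * real (card A) \<le> N + 16 * N * (64 * \<theta>\<^sup>2 * (4 / 3) + 8 / real n) + 400 * \<theta>\<^sup>2 * N * (4 / 3)"
    using inv' bad ch e1 e2 e3 by linarith
  also have "\<dots> \<le> 2 * ((1/2 + 1000 * \<theta>\<^sup>2 + 64 / real n) * N)"
  proof -
    have "0 \<le> \<theta>\<^sup>2 * N" using N0 by simp
    then show ?thesis by (simp add: algebra_simps)
  qed
  finally show ?thesis unfolding A_def N_def K_def by simp
qed



lemma sort_perm:
  fixes x :: "nat \<Rightarrow> real"
  shows "\<exists>\<pi>. bij_betw \<pi> {..<n} {..<n} \<and> (\<forall>i j. i \<le> j \<longrightarrow> j < n \<longrightarrow> x (\<pi> i) \<le> x (\<pi> j))"
proof -
  define xs where "xs = sort_key x [0..<n]"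
  have len: "length xs = n" unfolding xs_def by simp
  have dist: "distinct xs" unfolding xs_def by (simp add: distinct_sort)
  have st: "set xs = {..<n}" unfolding xs_def by auto
  have bij: "bij_betw ((!) xs) {..<n} {..<n}" using bij_betw_nth[OF dist] len st by simp
  have so: "sorted (map x xs)" unfolding xs_def by (rule sorted_sort_key)
  have "x (xs ! i) \<le> x (xs ! j)" if "i \<le> j" "j < n" for i j
    using sorted_nth_mono[OF so, of i j] that len by simp
  then show ?thesis using bij by blast
qed

lemma card_perm_le:
  fixes x :: "nat \<Rightarrow> real"
  assumes bij: "bij_betw \<pi> {..<n} {..<n}"
  shows "card {S\<in>Ks n k. P (sum x S)} \<le> card {S\<in>Ks n k. P (sum (x \<circ> \<pi>) S)}"
proof -
  define \<sigma> where "\<sigma> = inv_into {..<n} \<pi>"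
  have bs: "bij_betw \<sigma> {..<n} {..<n}" unfolding \<sigma>_def by (rule bij_betw_inv_into[OF bij])
  have ps: "i < n \<Longrightarrow> \<pi> (\<sigma> i) = i" for i unfolding \<sigma>_def using bij by (simp add: bij_betw_inv_into_right)
  have injs: "inj_on \<sigma> {..<n}" using bs by (rule bij_betw_imp_inj_on)
  have ims: "\<sigma> ` {..<n} = {..<n}" using bs by (rule bij_betw_imp_surj_on)
  have inj: "inj_on (\<lambda>S. \<sigma> ` S) {S\<in>Ks n k. P (sum x S)}"
  proof (rule inj_onI)
    fix S S' assume "S \<in> {S\<in>Ks n k. P (sum x S)}" "S' \<in> {S\<in>Ks n k. P (sum x S)}" "\<sigma> ` S = \<sigma> ` S'"
    then show "S = S'" using inj_on_image_eq_iff[OF injs] unfolding Ks_def by auto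
  qed
  have img: "(\<lambda>S. \<sigma> ` S) ` {S\<in>Ks n k. P (sum x S)} \<subseteq> {S\<in>Ks n k. P (sum (x \<circ> \<pi>) S)}"
  proof
    fix S' assume "S' \<in> (\<lambda>S. \<sigma> ` S) ` {S\<in>Ks n k. P (sum x S)}"
    then obtain S where S: "S \<subseteq> {..<n}" "card S = k" "P (sum x S)" "S' = \<sigma> ` S" unfolding Ks_def by auto
    have injS: "inj_on \<sigma> S" using injs S(1) by (rule inj_on_subset)
    have "S' \<subseteq> {..<n}" using S ims by auto
    moreover have "card S' = k" using S injS by (simp add: card_image)
    moreover have "sum (x \<circ> \<pi>) S' = sum x S"
    proof -
      have "sum (x \<circ> \<pi>) S' = (\<Sum>i\<in>S. (x \<circ> \<pi>) (\<sigma> i))" using S(4) injS by (simp add: sum.reindex)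
      also have "\<dots> = sum x S" using S(1) ps by (intro sum.cong) auto
      finally show ?thesis .
    qed
    ultimately show "S' \<in> {S\<in>Ks n k. P (sum (x \<circ> \<pi>) S)}" using S unfolding Ks_def by auto
  qed
  have "card {S\<in>Ks n k. P (sum x S)} = card ((\<lambda>S. \<sigma> ` S) ` {S\<in>Ks n k. P (sum x S)})"
    using inj by (simp add: card_image)
  also have "\<dots> \<le> card {S\<in>Ks n k. P (sum (x \<circ> \<pi>) S)}"
    using img by (intro card_mono) (auto intro: finite_subset[OF _ Ks_finite])
  finally show ?thesis .
qed

lemma per_z:
  fixes x :: "nat \<Rightarrow> real" and \<epsilon> z :: real
  assumes e: "0 < \<epsilon>" "\<epsilon> < 1" and n8: "8 \<le> n" and nbig: "1000 / \<epsilon>\<^sup>2 \<le> real n"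
    and norm: "(\<Sum>i<n. (x i)\<^sup>2) = 1" and sum: "(\<Sum>i<n. x i)\<^sup>2 \<le> real n / 4"
  defines "\<theta> \<equiv> sqrt (\<epsilon> / 2000)"
  shows "real (card {S \<in> Ks n (n div 2). \<bar>sum x S - z\<bar> \<le> \<theta>}) \<le> (1/2 + \<epsilon>) * real (card (Ks n (n div 2)))"
proof -
  have thp: "0 < \<theta>" unfolding \<theta>_def using e by simp
  have th2: "\<theta>\<^sup>2 = \<epsilon> / 2000" unfolding \<theta>_def using e by simp
  have N0: "0 \<le> real (card (Ks n (n div 2)))" by simp
  have npos: "0 < real n" using n8 by simp
  have e2: "\<epsilon>\<^sup>2 \<le> \<epsilon>" using e by (simp add: power2_eq_square mult_left_le)
  have ne: "1000 / \<epsilon> \<le> real n * \<epsilon>"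
  proof -
    have "1000 / \<epsilon> = (1000 / \<epsilon>\<^sup>2) * \<epsilon>" using e by (simp add: power2_eq_square field_simps)
    also have "\<dots> \<le> real n * \<epsilon>" using nbig e by (intro mult_right_mono) auto
    finally show ?thesis .
  qed
  show ?thesis
  proof (cases "\<exists>i<n. 4 * \<theta> \<le> \<bar>x i\<bar>")
    case True
    then obtain i where i: "i < n" "4 * \<theta> \<le> \<bar>x i\<bar>" by auto
    define G where "G = {j \<in> {..<n} - {i}. 2 * \<theta> < \<bar>x j - x i\<bar>}"
    define C where "C = {j \<in> {..<n} - {i}. \<not> 2 * \<theta> < \<bar>x j - x i\<bar>}"
    have GC: "card G + card C = n - 1"
    proof -
      have "{S \<in> {..<n} - {i}. True} = {..<n} - {i}" by blast
      then have "card ({..<n} - {i}) = card G + card C" unfolding G_def C_def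
        using card_split[of "{..<n} - {i}" "\<lambda>_. True" "\<lambda>j. 2 * \<theta> < \<bar>x j - x i\<bar>"] by (simp only: simp_thms finite_Diff finite_lessThan)
      then show ?thesis using i by simp
    qed
    have Cb: "real (card C) * (4 * \<theta>\<^sup>2) \<le> 1"
    proof -
      have "real (card C) * (4 * \<theta>\<^sup>2) = (\<Sum>j\<in>C. 4 * \<theta>\<^sup>2)" by simp
      also have "\<dots> \<le> (\<Sum>j\<in>C. (x j)\<^sup>2)"
      proof (rule sum_mono)
        fix j assume "j \<in> C"
        then have "\<bar>x j - x i\<bar> \<le> 2 * \<theta>" unfolding C_def by auto
        then have "2 * \<theta> \<le> \<bar>x j\<bar>" using i by linarith
        then have "(2 * \<theta>)\<^sup>2 \<le> (\<bar>x j\<bar>)\<^sup>2" using thp by (intro power_mono) auto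
        then show "4 * \<theta>\<^sup>2 \<le> (x j)\<^sup>2" by (simp add: power_mult_distrib)
      qed
      also have "\<dots> \<le> (\<Sum>j<n. (x j)\<^sup>2)" unfolding C_def by (intro sum_mono2) auto
      finally show ?thesis using norm by simp
    qed
    define Bc where "Bc = 1 / (4 * \<theta>\<^sup>2)"
    have Bc: "Bc = 500 / \<epsilon>" unfolding Bc_def th2 by simp
    have cC: "real (card C) \<le> Bc" unfolding Bc_def using Cb thp by (simp add: le_divide_eq)
    have Gbig: "real n - 1 - Bc \<le> real (card G)"
    proof -
      have "real (card G) + real (card C) = real n - 1" using GC n8 by (metis of_nat_1 of_nat_add of_nat_diff le_trans one_le_numeral)
      then show ?thesis using cC by linarith
    qed
    have "real (card {S \<in> Ks n (n div 2). \<bar>sum x S - z\<bar> \<le> \<theta>}) \<le> (1/2 + (1 + Bc)/(2*n)) * real (card (Ks n (n div 2)))"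
      using caseI[OF n8 i(1) _ _ Gbig] unfolding G_def by auto
    also have "\<dots> \<le> (1/2 + \<epsilon>) * real (card (Ks n (n div 2)))"
    proof -
      have "1 + Bc \<le> 2 * (real n * \<epsilon>)" unfolding Bc using ne e
        by (simp add: field_simps)
      then have X: "(1 + Bc) / (2 * real n) \<le> \<epsilon>" using npos by (simp add: divide_le_eq algebra_simps)
      show ?thesis using X N0 by (intro mult_right_mono) auto
    qed
    finally show ?thesis .
  next
    case False
    then have small: "\<And>i. i < n \<Longrightarrow> \<bar>x i\<bar> < 4 * \<theta>" by auto
    obtain \<pi> where pi: "bij_betw \<pi> {..<n} {..<n}" "\<forall>i j. i \<le> j \<longrightarrow> j < n \<longrightarrow> x (\<pi> i) \<le> x (\<pi> j)"
      using sort_perm by blast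
    define y where "y = x \<circ> \<pi>"
    have reidx: "(\<Sum>i<n. f (\<pi> i)) = (\<Sum>i<n. f i)" for f :: "nat \<Rightarrow> real"
      using sum.reindex_bij_betw[OF pi(1), of f] by simp
    have ny: "(\<Sum>i<n. (y i)\<^sup>2) = 1" unfolding y_def using reidx[of "\<lambda>i. (x i)\<^sup>2"] norm by simp
    have sy: "(\<Sum>i<n. y i)\<^sup>2 \<le> real n / 4" unfolding y_def using reidx[of x] sum by simp
    have smy: "\<And>i. i < n \<Longrightarrow> \<bar>y i\<bar> < 4 * \<theta>" unfolding y_def using small pi(1)
      by (simp add: bij_betw_def) (metis image_eqI lessThan_iff)
    have soy: "\<And>i j. i \<le> j \<Longrightarrow> j < n \<Longrightarrow> y i \<le> y j" unfolding y_def using pi(2) by simp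
    have "real (card {S \<in> Ks n (n div 2). \<bar>sum x S - z\<bar> \<le> \<theta>}) \<le> real (card {S \<in> Ks n (n div 2). \<bar>sum y S - z\<bar> \<le> \<theta>})"
      unfolding y_def using card_perm_le[OF pi(1), where x=x and k="n div 2" and P="\<lambda>s. \<bar>s - z\<bar> \<le> \<theta>"] by simp
    also have "\<dots> \<le> (1/2 + 1000 * \<theta>\<^sup>2 + 64 / real n) * real (card (Ks n (n div 2)))"
      by (rule caseII_sorted[OF n8 soy ny sy smy thp])
    also have "\<dots> \<le> (1/2 + \<epsilon>) * real (card (Ks n (n div 2)))"
    proof (intro mult_right_mono N0)
      have "128 / \<epsilon> \<le> real n"
      proof -
        have "128 / \<epsilon> \<le> 1000 / \<epsilon>" using e by (simp add: divide_right_mono)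
        also have "\<dots> \<le> 1000 / \<epsilon>\<^sup>2" using e e2 by (intro divide_left_mono) auto
        finally show ?thesis using nbig by linarith
      qed
      then have "64 / real n \<le> \<epsilon> / 2" using e npos by (simp add: field_simps)
      then show "1/2 + 1000 * \<theta>\<^sup>2 + 64 / real n \<le> 1/2 + \<epsilon>" unfolding th2 by simp
    qed
    finally show ?thesis .
  qed
qed



theorem lemma6p3:
  fixes \<epsilon> :: real
  assumes "0 < \<epsilon>" and "\<epsilon> < 1/8"
  shows "\<exists>\<theta>>0. \<exists>n0::nat. \<forall>n\<ge>n0. \<forall>x::nat \<Rightarrow> real.
           (\<Sum>i<n. (x i)\<^sup>2) = 1 \<longrightarrow>
           \<bar>(\<Sum>i<n. x i) / sqrt (real n)\<bar> \<le> 1/2 \<longrightarrow>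
           levy_slice n x \<theta> \<le> 1/2 + \<epsilon>"
proof -
  define \<theta> where "\<theta> = sqrt (\<epsilon> / 2000)"
  define n0 where "n0 = max 8 (nat \<lceil>1000 / \<epsilon>\<^sup>2\<rceil>)"
  have thp: "0 < \<theta>" unfolding \<theta>_def using assms by simp
  have main: "levy_slice n x \<theta> \<le> 1/2 + \<epsilon>"
    if n: "n0 \<le> n" and norm: "(\<Sum>i<n. (x i)\<^sup>2) = 1" and hs: "\<bar>(\<Sum>i<n. x i) / sqrt (real n)\<bar> \<le> 1/2"
    for n and x :: "nat \<Rightarrow> real"
  proof -
    have n8: "8 \<le> n" using n unfolding n0_def by simp
    have nbig: "1000 / \<epsilon>\<^sup>2 \<le> real n"
    proof -
      have "1000 / \<epsilon>\<^sup>2 \<le> real (nat \<lceil>1000 / \<epsilon>\<^sup>2\<rceil>)" by linarith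
      also have "\<dots> \<le> real n"
      proof -
        have "nat \<lceil>1000 / \<epsilon>\<^sup>2\<rceil> \<le> n" using n unfolding n0_def by (simp only: max.bounded_iff)
        then show ?thesis by (simp only: of_nat_le_iff)
      qed
      finally show ?thesis .
    qed
    have npos: "0 < real n" using n8 by simp
    have sq: "(\<Sum>i<n. x i)\<^sup>2 \<le> real n / 4"
    proof -
      have "((\<Sum>i<n. x i) / sqrt (real n))\<^sup>2 \<le> (1/2)\<^sup>2"
        using hs by (metis abs_le_square_iff abs_of_nonneg abs_ge_zero order.trans zero_le_divide_iff zero_le_one zero_le_numeral)
      then have "(\<Sum>i<n. x i)\<^sup>2 / real n \<le> 1/4" using npos by (simp add: power_divide)
      then show ?thesis using npos by (simp add: divide_le_eq)
    qed
    show ?thesis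
    proof (rule levy_bound)
      fix z
      show "real (card {S \<in> Ks n (n div 2). \<bar>(\<Sum>i\<in>S. x i) - z\<bar> \<le> \<theta>}) \<le> (1/2 + \<epsilon>) * real (card (Ks n (n div 2)))"
        unfolding \<theta>_def using assms by (intro per_z[OF _ _ n8 nbig norm sq]) auto
    qed
  qed
  show ?thesis using thp main by blast
qed


end
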